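(* Let $K$ be a field, $A=\{\alpha_1,\dots,\alpha_m\}\subset K$, $B=\{\beta_1,\dots,\beta_n\}\subset K$ finite sets with $|A|=m$, $|B|=n$, $f=\prod_{i}(x-\alpha_i)$, $g=\prod_j(x-\beta_j)$. Let $0\le p\le m$, $0\le q\le n$, set $d:=p+q$ and assume $0\le d\le n-1$. Then $$\operatorname{Syl}_{p,q}(A,B)=\begin{cases}(-1)^{p(m-d)}\binom{d}{p}\operatorname{Sres}_d(f,g) & \text{if } 0\le d\le\min\{m,n-1\},\\ 0 & \text{if } m<d<n-1,\\ (-1)^{(p+1)(m+n-1)}\binom{m}{p}f & \text{if } m<d=n-1.\end{cases}$$
   Context: For finite sets $Y,Z$, $\mathcal{R}(Y,Z):=\prod_{y\in Y,z\in Z}(y-z)$ (equal to $1$ if $Y$ or $Z$ is empty), and $\mathcal{R}(x,Z):=\mathcal{R}(\{x\},Z)$. For $0\le p\le m$, $0\le q\le n$, $$\operatorname{Syl}_{p,q}(A,B)(x):=\sum_{\substack{A'\subset A,\ B'\subset B\\ |A'|=p,\ |B'|=q}}\mathcal{R}(A',B')\,\mathcal{R}(A\setminus A',B\setminus B')\,\frac{\mathcal{R}(x,A')\,\mathcal{R}(x,B')}{\mathcal{R}(A',A\setminus A')\,\mathcal{R}(B',B\setminus B')}.$$ Write $f=\sum_{i=0}^m f_ix^i$, $g=\sum_{i=0}^ng_ix^i$ with $f_i=g_i=0$ outside the natural ranges. For $d\le\min\{m,n\}$ if $m\ne n$, or $d<m=n$, the subresultant $\operatorname{Sres}_d(f,g)(x)$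 is the determinant of the $(m+n-2d)\times(m+n-2d)$ matrix with rows $x^jf(x)$ for $j=n-d-1,\dots,0$ followed by rows $x^jg(x)$ for $j=m-d-1,\dots,0$, where the row of a polynomial $h$ has as first $m+n-2d-1$ entries the coefficients of $x^{m+n-d-1},\dots,x^{d+1}$ in $h$, and as last entry $h(x)$. *)

theory Defs
  imports "HOL-Computational_Algebra.Polynomial" "Jordan_Normal_Form.Determinant"
begin

definition Res :: "'a::field set \<Rightarrow> 'a set \<Rightarrow> 'a" where
  "Res Y Z = (\<Prod>(y,z)\<in>Y \<times> Z. y - z)"

definition Rpoly :: "'a::field set \<Rightarrow> 'a poly" where
  "Rpoly Z = (\<Prod>z\<in>Z. [:- z, 1:])"

definition Syl :: "nat \<Rightarrow> nat \<Rightarrow> 'a::field set \<Rightarrow> 'a set \<Rightarrow> 'a poly" where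
  "Syl p q A B = (\<Sum>(A',B') \<in> {(A',B'). A' \<subseteq> A \<and> B' \<subseteq> B \<and> card A' = p \<and> card B' = q}.
     smult (Res A' B' * Res (A - A') (B - B') / (Res A' (A - A') * Res B' (B - B')))
       (Rpoly A' * Rpoly B'))"

text \<open>Subresultant: determinant of the (m+n-2d) square matrix whose rows are
  x^j f (j = n-d-1,...,0) then x^j g (j = m-d-1,...,0); the row of h has as first
  m+n-2d-1 entries the coefficients of x^(m+n-d-1),...,x^(d+1) of h, and as last entry h.\<close>
definition Sres :: "nat \<Rightarrow> 'a::field poly \<Rightarrow> 'a poly \<Rightarrow> 'a poly" where
  "Sres d f g = (let m = degree f; n = degree g; k = m + n - 2 * d;
      rowpoly = (\<lambda>i. if i < n - d then monom 1 (n - d - 1 - i) * f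
                      else monom 1 (m - d - 1 - (i - (n - d))) * g)
    in det (mat k k (\<lambda>(i,j). if j = k - 1 then rowpoly i
                              else [: coeff (rowpoly i) (m + n - d - 1 - j) :])))"

end

theory Submission
  imports Defs
begin


definition Sub :: "nat \<Rightarrow> 'b set \<Rightarrow> 'b set set" where
  "Sub k A = {A'. A' \<subseteq> A \<and> card A' = k}"

definition Rv :: "'a::field \<Rightarrow> 'a set \<Rightarrow> 'a" where
  "Rv c S = (\<Prod>s\<in>S. c - s)"

definition SylT :: "'a::field set \<Rightarrow> 'a set \<Rightarrow> 'a set \<Rightarrow> 'a set \<Rightarrow> 'a poly" where
  "SylT A B A' B' = smult (Res A' B' * Res (A - A') (B - B') / (Res A' (A - A') * Res B' (B - B')))
       (Rpoly A' * Rpoly B')"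

lemma finite_Sub[simp]: "finite A \<Longrightarrow> finite (Sub k A)"
  unfolding Sub_def by (rule finite_subset[of _ "Pow A"]) auto

lemma Syl_double: "Syl p q A B = (\<Sum>A'\<in>Sub p A. \<Sum>B'\<in>Sub q B. SylT A B A' B')"
proof -
  have "{(A',B'). A' \<subseteq> A \<and> B' \<subseteq> B \<and> card A' = p \<and> card B' = q} = Sub p A \<times> Sub q B"
    unfolding Sub_def by auto
  thus ?thesis unfolding Syl_def SylT_def by (simp add: sum.cartesian_product)
qed

lemma Sub_insert:
  assumes "finite A" "c \<notin> A"
  shows "Sub p (insert c A) = (if p = 0 then {} else insert c ` Sub (p-1) A) \<union> Sub p A"
proof (rule equalityI; rule subsetI)
  fix X assume "X \<in> Sub p (insert c A)"
  hence X: "X \<subseteq> insert c A" "card X = p" unfolding Sub_def by auto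
  have fX: "finite X" using X(1) assms(1) finite_subset by blast
  show "X \<in> (if p = 0 then {} else insert c ` Sub (p-1) A) \<union> Sub p A"
  proof (cases "c \<in> X")
    case True
    have "card (X - {c}) = p - 1" using True fX X by auto
    moreover have "p \<noteq> 0" using True fX X card_0_eq by blast
    moreover have "X = insert c (X - {c})" using True by auto
    moreover have "X - {c} \<in> Sub (p-1) A"
      using X \<open>card (X - {c}) = p - 1\<close> unfolding Sub_def by auto
    ultimately have "X \<in> insert c ` Sub (p-1) A" by (metis image_eqI)
    thus ?thesis using \<open>p \<noteq> 0\<close> by simp
  next
    case False thus ?thesis using X unfolding Sub_def by auto
  qed
next
  fix X assume "X \<in> (if p = 0 then {} else insert c ` Sub (p-1) A) \<union> Sub p A"
  thus "X \<in> Sub p (insert c A)"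
  proof
    assume "X \<in> (if p = 0 then {} else insert c ` Sub (p-1) A)"
    then obtain Y where Y: "p \<noteq> 0" "Y \<subseteq> A" "card Y = p - 1" "X = insert c Y"
      unfolding Sub_def by (auto split: if_splits)
    have "finite Y" using Y assms finite_subset by blast
    moreover have "c \<notin> Y" using Y assms by auto
    ultimately have "card X = p" using Y by simp
    thus ?thesis using Y unfolding Sub_def by auto
  qed (auto simp: Sub_def)
qed

lemma sum_Sub_insert:
  assumes "finite A" "c \<notin> A"
  shows "(\<Sum>X\<in>Sub p (insert c A). h X) =
    (if p = 0 then 0 else (\<Sum>X\<in>Sub (p-1) A. h (insert c X))) + (\<Sum>X\<in>Sub p A. h X)"
proof -
  have disj: "(if p = 0 then {} else insert c ` Sub (p-1) A) \<inter> Sub p A = {}"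
    using assms(2) unfolding Sub_def by auto
  have inj: "inj_on (insert c) (Sub (p-1) A)"
  proof (rule inj_onI)
    fix x y assume "x \<in> Sub (p-1) A" "y \<in> Sub (p-1) A" "insert c x = insert c y"
    hence "c \<notin> x" "c \<notin> y" using assms(2) unfolding Sub_def by auto
    thus "x = y" using \<open>insert c x = insert c y\<close> by (metis Diff_insert_absorb)
  qed
  show ?thesis
    unfolding Sub_insert[OF assms]
    apply (subst sum.union_disjoint)
    using disj assms inj by (auto simp: sum.reindex)
qed

lemma Res_alt: "Res Y Z = (\<Prod>y\<in>Y. \<Prod>z\<in>Z. y - z)"
  unfolding Res_def by (simp add: prod.cartesian_product)

lemma Res_empty[simp]: "Res {} Z = 1" "Res Y {} = 1"
  unfolding Res_alt by auto

lemma Res_insert_left: "finite Y \<Longrightarrow> c \<notin> Y \<Longrightarrow> Res (insert c Y) Z = Rv c Z * Res Y Z"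
  unfolding Res_alt Rv_def by simp

lemma Res_insert_right: "finite Z \<Longrightarrow> c \<notin> Z \<Longrightarrow>
   Res Y (insert c Z) = (\<Prod>y\<in>Y. y - c) * Res Y Z"
  unfolding Res_alt by (simp add: prod.distrib)

lemma prod_minus_swap: "finite S \<Longrightarrow> (\<Prod>y\<in>S. y - c) = (-1)^card S * Rv c S"
proof -
  assume "finite S"
  have "(\<Prod>y\<in>S. y - c) = (\<Prod>y\<in>S. (-1) * (c - y))" by (rule prod.cong) auto
  also have "\<dots> = (-1)^card S * Rv c S" unfolding Rv_def prod.distrib by simp
  finally show ?thesis .
qed

lemma Rv_zero: "finite S \<Longrightarrow> c \<in> S \<Longrightarrow> Rv c S = 0"
  unfolding Rv_def by (rule prod_zero) auto

lemma Rv_nonzero: "c \<notin> S \<Longrightarrow> Rv (c::'a::field) S \<noteq> 0"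
  unfolding Rv_def by (cases "finite S") (auto simp: prod_zero_iff)

lemma Rv_split: "finite S \<Longrightarrow> T \<subseteq> S \<Longrightarrow> Rv c S = Rv c T * Rv c (S - T)"
  unfolding Rv_def by (metis prod.subset_diff mult.commute)

lemma Res_zero: "finite Y \<Longrightarrow> finite Z \<Longrightarrow> c \<in> Y \<Longrightarrow> c \<in> Z \<Longrightarrow> Res Y Z = 0"
  unfolding Res_alt by (rule prod_zero, simp, rule bexI[of _ c], rule prod_zero, auto)

lemma Res_nonzero: "Y \<inter> Z = {} \<Longrightarrow> Res Y (Z::'a::field set) \<noteq> 0"
  unfolding Res_def by (cases "finite (Y \<times> Z)") (auto simp: prod_zero_iff)

lemma Rpoly_empty[simp]: "Rpoly {} = 1" unfolding Rpoly_def by simp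

lemma Rpoly_insert: "finite S \<Longrightarrow> c \<notin> S \<Longrightarrow> Rpoly (insert c S) = [:-c,1:] * Rpoly S"
  unfolding Rpoly_def by simp

lemma poly_Rpoly: "poly (Rpoly S) c = Rv c S"
  unfolding Rpoly_def Rv_def poly_prod by simp

lemma Rpoly_monic: "finite S \<Longrightarrow> degree (Rpoly S) = card S \<and> lead_coeff (Rpoly S) = 1"
proof (induction S rule: finite_induct)
  case (insert c S)
  have d: "degree ([:-c,1:] * Rpoly S) = degree [:-c,1:] + degree (Rpoly S)"
    by (rule degree_mult_eq) (use insert in auto)
  have l: "lead_coeff ([:-c,1:] * Rpoly S) = lead_coeff [:-c,1:] * lead_coeff (Rpoly S)"
    by (rule lead_coeff_mult)
  show ?case unfolding Rpoly_insert[OF insert(1,2)] using d l insert(1,2) insert.IH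
    by (simp add: coeff_eq_0) (metis insert.IH)
qed simp

lemma degree_Rpoly[simp]: "finite S \<Longrightarrow> degree (Rpoly S) = card S"
  using Rpoly_monic by blast

lemma lead_coeff_Rpoly[simp]: "finite S \<Longrightarrow> lead_coeff (Rpoly S) = 1"
  using Rpoly_monic by blast

lemma Rpoly_nonzero[simp]: "Rpoly S \<noteq> 0"
  unfolding Rpoly_def by (cases "finite S") (auto simp: prod_zero_iff)

section \<open>Determinant structure\<close>

definition SMc :: "nat \<Rightarrow> nat \<Rightarrow> (nat \<Rightarrow> 'a::comm_ring_1 poly) \<Rightarrow> (nat \<Rightarrow> 'a poly) \<Rightarrow> 'a poly mat" where
  "SMc k E r v = mat k k (\<lambda>(i,j). if j = k - 1 then v i else [:coeff (r i) (E - j):])"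

abbreviation SM where "SM k E r \<equiv> SMc k E r r"

definition rowp :: "nat \<Rightarrow> nat \<Rightarrow> nat \<Rightarrow> 'a::comm_ring_1 poly \<Rightarrow> 'a poly \<Rightarrow> nat \<Rightarrow> 'a poly" where
  "rowp m n d f g i = (if i < n - d then monom 1 (n - d - 1 - i) * f
                      else monom 1 (m - d - 1 - (i - (n - d))) * g)"

lemma Sres_SM: "Sres d f g = det (SM (degree f + degree g - 2*d) (degree f + degree g - d - 1)
    (rowp (degree f) (degree g) d f g))"
  unfolding Sres_def Let_def SMc_def rowp_def by (rule arg_cong[of _ _ det], rule cong_mat) auto

lemma SMc_cong: "(\<And>i. i < k \<Longrightarrow> r i = r' i) \<Longrightarrow> (\<And>i. i < k \<Longrightarrow> v i = v' i) \<Longrightarrow>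
   SMc k E r v = SMc k E r' v'"
  unfolding SMc_def by (rule cong_mat) auto

lemma SMc_carrier[simp]: "SMc k E r v \<in> carrier_mat k k" unfolding SMc_def by auto
lemma SMc_dim[simp]: "dim_row (SMc k E r v) = k" "dim_col (SMc k E r v) = k" unfolding SMc_def by auto

lemma cofactor_SMc_indep: "cofactor (SMc k E r v) i (k - 1) = cofactor (SMc k E r v') i (k - 1)"
  unfolding cofactor_def mat_delete_def SMc_def
  by (rule arg_cong[of _ _ "\<lambda>x. _ * det x"], rule cong_mat) auto

lemma cofactor_SMc_const: "degree (cofactor (SMc k E r v) i (k - 1)) = 0"
proof -
  have "degree (det (mat_delete (SMc k E r v) i (k - 1))) \<le> 0 * (k - 1)"
    by (rule degree_det_le[of "k - 1"], auto simp: mat_delete_def SMc_def)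
  hence "degree (det (mat_delete (SMc k E r v) i (k - 1))) = 0" by simp
  moreover have "degree ((-1::'a poly)^(i + (k-1))) = 0"
    using degree_power_le[of "-1::'a poly" "i+(k-1)"] by simp
  ultimately show ?thesis unfolding cofactor_def
    by (metis (no_types) add_0 degree_mult_le le_zero_eq)
qed

definition cofs :: "nat \<Rightarrow> nat \<Rightarrow> (nat \<Rightarrow> 'a::comm_ring_1 poly) \<Rightarrow> nat \<Rightarrow> 'a" where
  "cofs k E r i = coeff (cofactor (SMc k E r (\<lambda>_. 0)) i (k - 1)) 0"

lemma cofactor_SMc: "cofactor (SMc k E r v) i (k - 1) = [:cofs k E r i:]"
  unfolding cofs_def cofactor_SMc_indep[of k E r v i "\<lambda>_. 0"]
  using degree_0_id[OF cofactor_SMc_const] by metis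

lemma det_SMc: assumes "k \<ge> 1"
  shows "det (SMc k E r v) = (\<Sum>i<k. smult (cofs k E r i) (v i))"
proof -
  have "det (SMc k E r v) = (\<Sum>i<k. SMc k E r v $$ (i, k-1) * cofactor (SMc k E r v) i (k - 1))"
    by (rule laplace_expansion_column[OF SMc_carrier], insert assms, auto)
  also have "\<dots> = (\<Sum>i<k. smult (cofs k E r i) (v i))"
    by (rule sum.cong, simp, unfold cofactor_SMc, insert assms, auto simp: SMc_def)
  finally show ?thesis .
qed

lemma det_SMc_zero_col:
  assumes k: "k \<ge> 1" and j: "j < k - 1" and v: "\<And>i. i < k \<Longrightarrow> v i = [:coeff (r i) (E - j):]"
  shows "det (SMc k E r v) = 0"
proof (rule det_identical_columns[OF SMc_carrier, of j "k - 1"])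
  show "col (SMc k E r v) j = col (SMc k E r v) (k - 1)"
    by (rule eq_vecI, insert k j v, auto simp: SMc_def)
qed (insert k j, auto)

lemma degree_SM:
  assumes k: "k \<ge> 1" and E: "k - 1 \<le> E" and deg: "\<And>i. i < k \<Longrightarrow> degree (r i) \<le> E"
  shows "degree (det (SM k E r)) \<le> E + 1 - k"
proof (rule degree_le, intro allI impI)
  fix e assume e: "E + 1 - k < e"
  have "coeff (det (SM k E r)) e = (\<Sum>i<k. cofs k E r i * coeff (r i) e)"
    unfolding det_SMc[OF k] coeff_sum by simp
  also have "\<dots> = coeff (det (SMc k E r (\<lambda>i. [:coeff (r i) e:]))) 0"
    unfolding det_SMc[OF k] coeff_sum by simp
  also have "\<dots> = 0"
  proof (cases "e \<le> E")
    case True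
    have "det (SMc k E r (\<lambda>i. [:coeff (r i) e:])) = 0"
      by (rule det_SMc_zero_col[OF k, of "E - e"], insert True e E k, auto)
    thus ?thesis by simp
  next
    case False
    hence "\<And>i. i < k \<Longrightarrow> coeff (r i) e = 0" using deg by (meson coeff_eq_0 le_less_trans not_le)
    thus ?thesis unfolding det_SMc[OF k] coeff_sum by simp
  qed
  finally show "coeff (det (SM k E r)) e = 0" .
qed

lemma coeff_lin_mult_Suc: fixes p :: "'a::comm_ring_1 poly" shows "coeff ([:a, 1:] * p) (Suc n) = coeff p n + a * coeff p (Suc n)"
  by (simp add: mult_pCons_left add.commute)

lemma sum_two_delta: "j < k \<Longrightarrow>
  (\<Sum>l\<in>{0..<k}. f l * ((if l = j then 1 else 0) + (if Suc l = j then x else 0))) =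
   f j + (if j = 0 then 0 else f (j - 1) * (x::'b::comm_ring_1))"
proof -
  assume j: "j < k"
  have "(\<Sum>l\<in>{0..<k}. f l * ((if l = j then 1 else 0) + (if Suc l = j then x else 0))) =
    (\<Sum>l\<in>{0..<k}. (if l = j then f l else 0) + (if Suc l = j then f l * x else 0))"
    by (rule sum.cong) auto
  also have "\<dots> = f j + (\<Sum>l\<in>{0..<k}. (if Suc l = j then f l * x else 0))"
    using j by (simp add: sum.distrib sum.delta)
  also have "(\<Sum>l\<in>{0..<k}. (if Suc l = j then f l * x else 0)) = (if j = 0 then 0 else f (j - 1) * x)"
  proof (cases j)
    case (Suc j')
    have "(\<Sum>l\<in>{0..<k}. (if Suc l = j then f l * x else 0)) = (\<Sum>l\<in>{0..<k}. (if l = j' then f l * x else 0))"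
      by (rule sum.cong) (auto simp: Suc)
    thus ?thesis using j Suc by (simp add: sum.delta)
  qed simp
  finally show ?thesis .
qed

definition Wm :: "nat \<Rightarrow> 'a::comm_ring_1 \<Rightarrow> 'a poly mat" where
  "Wm k c = mat k k (\<lambda>(l,j). if j = k - 1 then (if l = k - 1 then [:-c,1:] else 0)
      else (if l = j then 1 else 0) + (if Suc l = j then [:-c:] else 0))"

lemma Wm_dim[simp]: "dim_row (Wm k c) = k" "dim_col (Wm k c) = k" unfolding Wm_def by auto

lemma det_Wm: assumes k: "k \<ge> 1" shows "det (Wm k c) = [:-c,1:]"
proof -
  have ut: "upper_triangular (Wm k c)" unfolding upper_triangular_def Wm_def by auto
  have "det (Wm k c) = (\<Prod>i = 0..<k. Wm k c $$ (i,i))"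
    by (subst det_upper_triangular[OF ut, of k], auto simp: Wm_def prod_list_diag_prod)
  also have "\<dots> = (\<Prod>i = 0..<Suc (k-1). Wm k c $$ (i,i))" using k by simp
  also have "\<dots> = (\<Prod>i = 0..<k-1. Wm k c $$ (i,i)) * Wm k c $$ (k-1,k-1)"
    by (rule prod.atLeast0_lessThan_Suc)
  also have "(\<Prod>i = 0..<k-1. Wm k c $$ (i,i)) = 1"
    by (rule prod.neutral, auto simp: Wm_def)
  also have "Wm k c $$ (k-1,k-1) = [:-c,1:]" using k by (auto simp: Wm_def)
  finally show ?thesis by simp
qed

lemma SM_shift:
  assumes k: "k \<ge> 1" and E: "k - 1 \<le> E" "1 \<le> E"
    and deg: "\<And>i. i < k \<Longrightarrow> degree (r i) \<le> E - 1"
  shows "det (SM k E (\<lambda>i. [:-c,1:] * r i)) = [:-c,1:] * det (SM k (E - 1) r)"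
proof -
  have eq: "SM k E (\<lambda>i. [:-c,1:] * r i) = SM k (E - 1) r * Wm k c"
  proof (rule eq_matI)
    fix i j assume i: "i < dim_row (SM k (E - 1) r * Wm k c)" and j: "j < dim_col (SM k (E - 1) r * Wm k c)"
    hence i: "i < k" and j: "j < k" by (auto simp: Wm_def SMc_def)
    have "(SM k (E - 1) r * Wm k c) $$ (i,j) = (\<Sum>l\<in>{0..<k}. SM k (E - 1) r $$ (i,l) * Wm k c $$ (l,j))"
      using i j by (simp add: scalar_prod_def)
    also have "\<dots> = SM k E (\<lambda>i. [:-c,1:] * r i) $$ (i,j)"
    proof (cases "j = k - 1")
      case True
      have "(\<Sum>l\<in>{0..<k}. SM k (E - 1) r $$ (i,l) * Wm k c $$ (l,j)) =
            (\<Sum>l\<in>{0..<k}. if l = k - 1 then SM k (E - 1) r $$ (i,l) * [:-c,1:] else 0)"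
        by (rule sum.cong, auto simp: Wm_def True)
      also have "\<dots> = SM k (E - 1) r $$ (i,k-1) * [:-c,1:]" using k by (simp add: sum.delta)
      finally show ?thesis using True i k by (simp add: SMc_def mult.commute)
    next
      case False
      hence jk: "j < k - 1" using j by auto
      have "(\<Sum>l\<in>{0..<k}. SM k (E - 1) r $$ (i,l) * Wm k c $$ (l,j)) =
            (\<Sum>l\<in>{0..<k}. SM k (E - 1) r $$ (i,l) * ((if l = j then 1 else 0) + (if Suc l = j then [:-c:] else 0)))"
        by (rule sum.cong) (use j jk in \<open>auto simp: Wm_def\<close>)
      also have "\<dots> = SM k (E - 1) r $$ (i,j) + (if j = 0 then 0 else SM k (E - 1) r $$ (i,j - 1) * [:-c:])"
        by (rule sum_two_delta[OF j])
      also have "\<dots> = [:coeff (r i) (E - 1 - j) + (if j = 0 then 0 else - c * coeff (r i) (E - j)):]"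
        using i jk E by (auto simp: SMc_def)
      also have "\<dots> = [:coeff ([:-c,1:] * r i) (E - j):]"
      proof -
        have Ej: "E - j = Suc (E - 1 - j)" using jk E by auto
        have "coeff ([:-c,1:] * r i) (E - j) = coeff (r i) (E - 1 - j) + (- c) * coeff (r i) (E - j)"
          unfolding Ej coeff_lin_mult_Suc by simp
        moreover have "j = 0 \<Longrightarrow> coeff (r i) E = 0"
          using deg[OF i] E by (intro coeff_eq_0) auto
        ultimately show ?thesis by auto
      qed
      finally show ?thesis using i j False by (simp add: SMc_def)
    qed
    finally show "SM k E (\<lambda>i. [:-c,1:] * r i) $$ (i,j) = (SM k (E - 1) r * Wm k c) $$ (i,j)" by simp
  qed (auto simp: Wm_def)
  have "det (SM k (E - 1) r * Wm k c) = det (SM k (E - 1) r) * det (Wm k c)"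
    by (rule det_mult[of _ k], auto simp: Wm_def)
  thus ?thesis unfolding eq det_Wm[OF k] by (simp only: mult.commute)
qed

lemma SM_shift0:
  fixes c :: "'a::idom"
  assumes k: "k \<ge> 1" and deg: "\<And>i. i < k \<Longrightarrow> degree ([:-c,1:] * r i) \<le> k - 1"
  shows "det (SM k (k - 1) (\<lambda>i. [:-c,1:] * r i)) = 0"
proof -
  define Q where "Q = (\<lambda>i. [:-c,1:] * r i)"
  define H where "H = (\<Sum>i<k. smult (cofs k (k-1) Q i) (r i))"
  have eq: "det (SM k (k - 1) Q) = [:-c,1:] * H"
    unfolding det_SMc[OF k] H_def Q_def by (simp add: sum_distrib_left mult_smult_right)
  have "degree (det (SM k (k - 1) Q)) \<le> k - 1 + 1 - k"
  proof (rule degree_SM[OF k])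
    fix i assume "i < k" thus "degree (Q i) \<le> k - 1" unfolding Q_def by (rule deg)
  qed simp
  hence d0: "degree ([:-c,1:] * H) = 0" unfolding eq using k by simp
  have "H = 0"
  proof (rule ccontr)
    assume "H \<noteq> 0"
    hence "degree ([:-c,1:] * H) = degree [:-c,1:] + degree H" by (intro degree_mult_eq) auto
    thus False using d0 by simp
  qed
  thus ?thesis unfolding Q_def[symmetric] eq by simp
qed

lemma degree_monom_mult_le: "degree (monom 1 a * p) \<le> a + degree p"
  by (rule order.trans[OF degree_mult_le], rule add_right_mono, rule degree_monom_le)

lemma rowp_degree:
  assumes f: "degree f = m" and g: "degree g = n" and d: "d < n" "d \<le> m" and i: "i < m + n - 2 * d"
  shows "degree (rowp m n d f g i) \<le> m + n - d - 1"
proof (cases "i < n - d")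
  case True
  thus ?thesis unfolding rowp_def using degree_monom_mult_le[of "n - d - 1 - i" f] f d by auto
next
  case False
  thus ?thesis unfolding rowp_def using degree_monom_mult_le[of "m - d - 1 - (i - (n - d))" g] g d i
    by auto
qed

lemma degree_lin_mult: "(p::'a::field poly) \<noteq> 0 \<Longrightarrow> degree ([:-c,1:] * p) = degree p + 1"
  by (subst degree_mult_eq, auto simp del: mult_pCons_left)

lemma Sres_common_root:
  fixes f0 g0 :: "'a::field poly"
  assumes nz: "f0 \<noteq> 0" "g0 \<noteq> 0"
    and d: "1 \<le> d" "d \<le> degree f0 + 1" "d < degree g0 + 1"
  shows "Sres d (([:-c,1:] * f0)) (([:-c,1:] * g0)) = [:-c,1:] * Sres (d - 1) (f0) (g0)"
proof -
  define m0 n0 where "m0 = degree f0" and "n0 = degree g0"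
  define k E where "k = (m0 + 1) + (n0 + 1) - 2 * d" and "E = (m0 + 1) + (n0 + 1) - d - 1"
  have degs: "degree (([:-c,1:] * f0)) = m0 + 1" "degree (([:-c,1:] * g0)) = n0 + 1"
    "degree (f0) = m0" "degree (g0) = n0"
    using nz degree_lin_mult[of f0 c] degree_lin_mult[of g0 c] by (simp_all add: m0_def n0_def del: mult_pCons_left)
  have k1: "k \<ge> 1" and kE: "k - 1 \<le> E" and E1: "1 \<le> E" using d unfolding k_def E_def m0_def n0_def by auto
  have k': "m0 + n0 - 2 * (d - 1) = k" and E': "m0 + n0 - (d - 1) - 1 = E - 1"
    using d unfolding k_def E_def m0_def n0_def by auto
  have rows: "rowp (m0+1) (n0+1) d (([:-c,1:] * f0)) (([:-c,1:] * g0)) i =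
      [:-c,1:] * rowp m0 n0 (d - 1) (f0) (g0) i" for i
    using d unfolding rowp_def
    by (auto simp: m0_def n0_def ac_simps simp del: mult_pCons_left mult_pCons_right)
  have "Sres d (([:-c,1:] * f0)) (([:-c,1:] * g0)) =
        det (SM k E (\<lambda>i. [:-c,1:] * rowp m0 n0 (d - 1) (f0) (g0) i))"
    unfolding Sres_SM degs k_def[symmetric] E_def[symmetric] rows ..
  also have "\<dots> = [:-c,1:] * det (SM k (E - 1) (rowp m0 n0 (d - 1) (f0) (g0)))"
  proof (rule SM_shift[OF k1 kE E1])
    fix i assume "i < k"
    thus "degree (rowp m0 n0 (d - 1) (f0) (g0) i) \<le> E - 1"
      using rowp_degree[OF degs(3,4), of "d - 1" i] d k' E' unfolding m0_def n0_def by auto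
  qed
  also have "\<dots> = [:-c,1:] * Sres (d - 1) (f0) (g0)"
    unfolding Sres_SM degs k' E' ..
  finally show ?thesis .
qed

lemma Sres_common_root0:
  fixes f0 g0 :: "'a::field poly"
  assumes nz: "f0 \<noteq> 0" "g0 \<noteq> 0"
  shows "Sres 0 (([:-c,1:] * f0)) (([:-c,1:] * g0)) = 0"
proof -
  define m0 n0 where "m0 = degree f0" and "n0 = degree g0"
  define k where "k = (m0 + 1) + (n0 + 1)"
  have degs: "degree (([:-c,1:] * f0)) = m0 + 1" "degree (([:-c,1:] * g0)) = n0 + 1"
    "degree (f0) = m0" "degree (g0) = n0"
    using nz degree_lin_mult[of f0 c] degree_lin_mult[of g0 c] by (simp_all add: m0_def n0_def del: mult_pCons_left)
  have k1: "k \<ge> 1" unfolding k_def by auto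
  have rows: "rowp (m0+1) (n0+1) 0 (([:-c,1:] * f0)) (([:-c,1:] * g0)) i =
      [:-c,1:] * rowp (m0+1) (n0+1) 0 (f0) (g0) i" for i
    unfolding rowp_def
    by (auto simp: ac_simps simp del: mult_pCons_left mult_pCons_right)
  have "Sres 0 (([:-c,1:] * f0)) (([:-c,1:] * g0)) =
        det (SM k (k - 1) (\<lambda>i. [:-c,1:] * rowp (m0+1) (n0+1) 0 (f0) (g0) i))"
    unfolding Sres_SM degs rows by (simp add: k_def)
  also have "\<dots> = 0"
  proof (rule SM_shift0[OF k1])
    fix i assume i: "i < k"
    have "degree (rowp (m0+1) (n0+1) 0 (([:-c,1:] * f0)) (([:-c,1:] * g0)) i) \<le> m0 + 1 + (n0 + 1) - 0 - 1"
      by (rule rowp_degree[OF degs(1,2)], insert i, auto simp: k_def)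
    thus "degree ([:-c,1:] * rowp (m0+1) (n0+1) 0 (f0) (g0) i) \<le> k - 1"
      unfolding rows by (simp add: k_def)
  qed
  finally show ?thesis .
qed

lemma Sres_one:
  fixes g :: "'a::field poly"
  assumes n: "degree g \<ge> 1"
  shows "Sres 0 1 g = 1"
proof -
  define n where "n = degree g"
  have "Sres 0 1 g = det (SM n (n - 1) (rowp 0 n 0 1 g))" unfolding Sres_SM n_def by simp
  also have "\<dots> = (\<Prod>i = 0..<n. SM n (n - 1) (rowp 0 n 0 1 g) $$ (i,i))"
  proof (rule det_upper_triangular[of _ n, unfolded prod_list_diag_prod, THEN trans])
    show "upper_triangular (SM n (n - 1) (rowp 0 n 0 1 g))"
      unfolding upper_triangular_def SMc_def rowp_def by (auto simp: coeff_monom)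
  qed auto
  also have "\<dots> = 1"
    by (rule prod.neutral, auto simp: SMc_def rowp_def coeff_monom)
  finally show ?thesis .
qed

section \<open>Generic determinants over polynomial polynomials\<close>

lemma coeff_of_int_mult: "coeff (of_int z * p) n = of_int z * coeff p n"
  by (simp add: of_int_poly)

lemma coeff_mult_bound:
  fixes p q :: "'a::comm_semiring_1 poly"
  assumes "degree p \<le> a" "degree q \<le> b"
  shows "coeff (p * q) (a + b) = coeff p a * coeff q b"
proof -
  have "coeff (p * q) (a + b) = (\<Sum>i\<le>a + b. coeff p i * coeff q (a + b - i))" by (rule coeff_mult)
  also have "\<dots> = (\<Sum>i\<in>{a}. coeff p i * coeff q (a + b - i))"
  proof (rule sum.mono_neutral_right)
    show "\<forall>i\<in>{..a + b} - {a}. coeff p i * coeff q (a + b - i) = 0"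
    proof
      fix i assume "i \<in> {..a + b} - {a}"
      hence "i < a \<or> i > a" by auto
      thus "coeff p i * coeff q (a + b - i) = 0"
        using assms by (auto simp: coeff_eq_0)
    qed
  qed auto
  finally show ?thesis by simp
qed

lemma coeff_prod_bound:
  fixes p :: "'b \<Rightarrow> 'a::comm_semiring_1 poly"
  assumes "finite I" "\<And>i. i \<in> I \<Longrightarrow> degree (p i) \<le> b i"
  shows "coeff (\<Prod>i\<in>I. p i) (\<Sum>i\<in>I. b i) = (\<Prod>i\<in>I. coeff (p i) (b i))"
  using assms
proof (induction I rule: finite_induct)
  case (insert x F)
  have "coeff (\<Prod>i\<in>insert x F. p i) (\<Sum>i\<in>insert x F. b i) = coeff (p x * (\<Prod>i\<in>F. p i)) (b x + (\<Sum>i\<in>F. b i))"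
    using insert by simp
  also have "\<dots> = coeff (p x) (b x) * coeff (\<Prod>i\<in>F. p i) (\<Sum>i\<in>F. b i)"
  proof (rule coeff_mult_bound)
    show "degree (prod p F) \<le> sum b F"
      by (rule order.trans[OF degree_prod_sum_le], simp add: insert, rule sum_mono, simp add: insert)
  qed (simp add: insert)
  finally show ?case using insert by simp
qed simp

lemma degree_det_rows:
  fixes M :: "'a::comm_ring_1 poly mat"
  assumes M: "M \<in> carrier_mat k k" and b: "\<And>i j. i < k \<Longrightarrow> j < k \<Longrightarrow> degree (M $$ (i,j)) \<le> b i"
  shows "degree (det M) \<le> (\<Sum>i<k. b i)"
proof -
  have "degree (det M) \<le> (\<Sum>i<k. b i)" unfolding det_def'[OF M]
  proof (rule degree_sum_le)
    fix p assume p: "p \<in> {p. p permutes {0..<k}}"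
    have "degree (signof p * (\<Prod>i = 0..<k. M $$ (i, p i))) \<le> degree (\<Prod>i = 0..<k. M $$ (i, p i))"
      by (simp add: of_int_poly degree_smult_le)
    also have "\<dots> \<le> (\<Sum>i = 0..<k. degree (M $$ (i, p i)))"
      using degree_prod_sum_le[of "{0..<k}" "\<lambda>i. M $$ (i, p i)"] by (simp add: o_def)
    also have "\<dots> \<le> (\<Sum>i = 0..<k. b i)" using p b by (intro sum_mono) (auto simp: permutes_def)
    finally show "degree (signof p * (\<Prod>i = 0..<k. M $$ (i, p i))) \<le> (\<Sum>i<k. b i)"
      by (simp add: atLeast0LessThan)
  qed (simp add: finite_permutations)
  thus ?thesis .
qed

lemma coeff_det_rows:
  fixes M :: "'a::comm_ring_1 poly mat"
  assumes M: "M \<in> carrier_mat k k" and b: "\<And>i j. i < k \<Longrightarrow> j < k \<Longrightarrow> degree (M $$ (i,j)) \<le> b i"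
  shows "coeff (det M) (\<Sum>i<k. b i) = det (mat k k (\<lambda>(i,j). coeff (M $$ (i,j)) (b i)))"
proof -
  have "coeff (det M) (\<Sum>i<k. b i) =
    (\<Sum>p\<in>{p. p permutes {0..<k}}. signof p * coeff (\<Prod>i = 0..<k. M $$ (i, p i)) (\<Sum>i=0..<k. b i))"
    unfolding det_def'[OF M] coeff_sum coeff_of_int_mult by (simp add: atLeast0LessThan)
  also have "\<dots> = (\<Sum>p\<in>{p. p permutes {0..<k}}. signof p * (\<Prod>i = 0..<k. coeff (M $$ (i, p i)) (b i)))"
  proof (rule sum.cong[OF refl])
    fix p assume p: "p \<in> {p. p permutes {0..<k}}"
    have "coeff (\<Prod>i = 0..<k. M $$ (i, p i)) (\<Sum>i=0..<k. b i) = (\<Prod>i = 0..<k. coeff (M $$ (i, p i)) (b i))"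
      by (rule coeff_prod_bound, insert p b, auto simp: permutes_def)
    thus "signof p * coeff (\<Prod>i = 0..<k. M $$ (i, p i)) (\<Sum>i=0..<k. b i) =
      signof p * (\<Prod>i = 0..<k. coeff (M $$ (i, p i)) (b i))" by simp
  qed
  also have "\<dots> = det (mat k k (\<lambda>(i,j). coeff (M $$ (i,j)) (b i)))"
    unfolding det_def'[of "mat k k (\<lambda>(i,j). coeff (M $$ (i,j)) (b i))" k, OF mat_carrier]
  proof (rule sum.cong[OF refl])
    fix p assume p: "p \<in> {p. p permutes {0..<k}}"
    have "(\<Prod>i = 0..<k. coeff (M $$ (i, p i)) (b i)) = (\<Prod>i = 0..<k. mat k k (\<lambda>(i,j). coeff (M $$ (i,j)) (b i)) $$ (i, p i))"
      by (rule prod.cong, insert p, auto simp: permutes_def)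
    thus "signof p * (\<Prod>i = 0..<k. coeff (M $$ (i, p i)) (b i)) =
      signof p * (\<Prod>i = 0..<k. mat k k (\<lambda>(i,j). coeff (M $$ (i,j)) (b i)) $$ (i, p i))" by simp
  qed
  finally show ?thesis .
qed

definition coeffx :: "'a::comm_ring_1 poly poly \<Rightarrow> nat \<Rightarrow> 'a poly poly" where
  "coeffx P e = map_poly (\<lambda>p. [:coeff p e:]) P"

lemma poly_coeffx: "poly (coeffx P e) [:c:] = [:coeff (poly P [:c:]) e:]"
  unfolding coeffx_def
proof (induction P)
  case (pCons a P)
  show ?case by (simp add: map_poly_pCons pCons.IH)
qed simp

lemma coeff_coeffx: "coeff (coeffx P e) n = [:coeff (coeff P n) e:]"
  unfolding coeffx_def by (simp add: coeff_map_poly)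

lemma degree_coeffx: "degree (coeffx P e) \<le> degree P"
  by (rule degree_le, auto simp: coeff_coeffx coeff_eq_0)

definition SMg :: "nat \<Rightarrow> nat \<Rightarrow> (nat \<Rightarrow> 'a::comm_ring_1 poly poly) \<Rightarrow> 'a poly poly mat" where
  "SMg k E R = mat k k (\<lambda>(i,j). if j = k - 1 then R i else coeffx (R i) (E - j))"

lemma SMg_carrier[simp]: "SMg k E R \<in> carrier_mat k k" unfolding SMg_def by auto

lemma poly_det_SMg: "poly (det (SMg k E R)) [:c:] = det (SM k E (\<lambda>i. poly (R i) [:c:]))"
proof -
  interpret h: comm_ring_hom "\<lambda>P. poly P [:c:]" by unfold_locales auto
  have "map_mat (\<lambda>P. poly P [:c:]) (SMg k E R) = SM k E (\<lambda>i. poly (R i) [:c:])"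
    by (rule eq_matI, auto simp: SMg_def SMc_def poly_coeffx)
  hence "det (SM k E (\<lambda>i. poly (R i) [:c:])) = det (map_mat (\<lambda>P. poly P [:c:]) (SMg k E R))" by simp
  also have "\<dots> = poly (det (SMg k E R)) [:c:]" by (rule h.hom_det)
  finally show ?thesis by simp
qed

lemma degree_det_SMg:
  assumes "\<And>i. i < k \<Longrightarrow> degree (R i) \<le> b i"
  shows "degree (det (SMg k E R)) \<le> (\<Sum>i<k. b i)"
  by (rule degree_det_rows[OF SMg_carrier], insert assms, auto simp: SMg_def intro: order.trans[OF degree_coeffx])

lemma coeff_det_SMg:
  assumes "\<And>i. i < k \<Longrightarrow> degree (R i) \<le> b i"
  shows "coeff (det (SMg k E R)) (\<Sum>i<k. b i) = det (SM k E (\<lambda>i. coeff (R i) (b i)))"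
proof -
  have "coeff (det (SMg k E R)) (\<Sum>i<k. b i) = det (mat k k (\<lambda>(i,j). coeff (SMg k E R $$ (i,j)) (b i)))"
    by (rule coeff_det_rows[OF SMg_carrier], insert assms, auto simp: SMg_def intro: order.trans[OF degree_coeffx])
  also have "mat k k (\<lambda>(i,j). coeff (SMg k E R $$ (i,j)) (b i)) = SM k E (\<lambda>i. coeff (R i) (b i))"
    by (rule eq_matI, auto simp: SMg_def SMc_def coeff_coeffx)
  finally show ?thesis .
qed

lemma SM_scale:
  fixes a :: "nat \<Rightarrow> 'a::comm_ring_1"
  shows "det (SM k E (\<lambda>i. smult (a i) (r i))) = smult (\<Prod>i<k. a i) (det (SM k E r))"
proof -
  define D where "D = mat k k (\<lambda>(i,j). if i = j then [:a i:] else 0)"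
  have eq: "SM k E (\<lambda>i. smult (a i) (r i)) = D * SM k E r"
  proof (rule eq_matI)
    fix i j assume "i < dim_row (D * SM k E r)" "j < dim_col (D * SM k E r)"
    hence i: "i < k" and j: "j < k" by (auto simp: D_def)
    have "(D * SM k E r) $$ (i,j) = (\<Sum>l\<in>{0..<k}. D $$ (i,l) * SM k E r $$ (l,j))"
      using i j by (simp add: scalar_prod_def D_def)
    also have "\<dots> = (\<Sum>l\<in>{0..<k}. if l = i then [:a i:] * SM k E r $$ (l,j) else 0)"
      by (rule sum.cong, auto simp: D_def i)
    also have "\<dots> = [:a i:] * SM k E r $$ (i,j)" using i by (simp add: sum.delta)
    also have "\<dots> = SM k E (\<lambda>i. smult (a i) (r i)) $$ (i,j)" using i j by (auto simp: SMc_def)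
    finally show "SM k E (\<lambda>i. smult (a i) (r i)) $$ (i,j) = (D * SM k E r) $$ (i,j)" by simp
  qed (auto simp: D_def)
  have "det D = (\<Prod>i = 0..<k. D $$ (i,i))"
    by (subst det_upper_triangular[of _ k], auto simp: D_def upper_triangular_def prod_list_diag_prod)
  also have "\<dots> = (\<Prod>i = 0..<k. [:a i:])" by (rule prod.cong, auto simp: D_def)
  also have "\<dots> = [:\<Prod>i<k. a i:]" by (induct k, auto simp: atLeast0LessThan)
  finally have dD: "det D = [:\<Prod>i<k. a i:]" .
  have "det (D * SM k E r) = det D * det (SM k E r)" by (rule det_mult[of _ k], auto simp: D_def)
  thus ?thesis unfolding eq dD by simp
qed

definition Rg :: "nat \<Rightarrow> nat \<Rightarrow> nat \<Rightarrow> 'a::comm_ring_1 poly \<Rightarrow> 'a poly \<Rightarrow> nat \<Rightarrow> 'a poly poly" where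
  "Rg m n d f0 g i = (if i < n - d then [:monom 1 (n - d - 1 - i) * f0:] * [:[:0,1:], -1:]
      else [:monom 1 (m - d - 1 - (i - (n - d))) * g:])"

lemma sum_ind: "(\<Sum>i<k. (if i < a then 1 else 0::nat)) = min a k"
  by (induct k) auto

lemma prod_ind: "(\<Prod>i<k. (if i < a then x else 1)) = x ^ (min a k)"
proof (induct k)
  case (Suc k)
  show ?case
  proof (cases "k < a")
    case True
    hence "min a (Suc k) = Suc k" "min a k = k" by auto
    thus ?thesis using Suc True by (simp add: power_Suc2)
  qed (use Suc in \<open>auto simp: min_def\<close>)
qed simp

lemma poly_Rg: "poly (Rg m n d f0 g i) [:c:] = rowp m n d (f0 * [:-c,1:]) g i"
  unfolding Rg_def rowp_def by (auto simp: ac_simps simp del: mult_pCons_left mult_pCons_right)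

lemma degree_Rg: "degree (Rg m n d f0 g i) \<le> (if i < n - d then 1 else 0)"
proof -
  have "degree ([:monom 1 (n - d - 1 - i) * f0:] * [:[:0,1:], -1:]) \<le> 1"
    by (rule order.trans[OF degree_mult_le], auto)
  thus ?thesis unfolding Rg_def by auto
qed

lemma Sres_gen:
  fixes f0 g :: "'a::field poly"
  assumes f0: "degree f0 = m0" "f0 \<noteq> 0" and g: "degree g = n"
  shows "poly (det (SMg (m0 + 1 + n - 2 * d) (m0 + 1 + n - d - 1) (Rg (m0 + 1) n d f0 g))) [:c:]
     = Sres d (f0 * [:-c,1:]) g"
proof -
  have "degree (f0 * [:-c,1:]) = m0 + 1" using f0 by (subst degree_mult_eq) auto
  thus ?thesis unfolding poly_det_SMg poly_Rg Sres_SM g by simp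
qed

lemma Sres_gen_degree:
  assumes "d \<le> m0 + 1" "d \<le> n"
  shows "degree (det (SMg (m0 + 1 + n - 2 * d) E (Rg (m0 + 1) n d f0 g))) \<le> n - d"
proof -
  have "degree (det (SMg (m0 + 1 + n - 2 * d) E (Rg (m0 + 1) n d f0 g))) \<le>
     (\<Sum>i<m0 + 1 + n - 2 * d. (if i < n - d then 1 else 0))"
    by (rule degree_det_SMg, rule degree_Rg)
  also have "\<dots> = n - d" unfolding sum_ind using assms by simp
  finally show ?thesis .
qed

lemma Sres_gen_top:
  fixes f0 g :: "'a::field poly"
  assumes f0: "degree f0 = m0" and g: "degree g = n" "lead_coeff g = 1" and n: "n \<ge> 1"
  shows "coeff (det (SMg (m0 + 1 + n) (m0 + n) (Rg (m0 + 1) n 0 f0 g))) n = Sres 0 f0 g"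
proof -
  define k where "k = m0 + 1 + n"
  define r' where "r' = (\<lambda>i. if i < n then - (monom 1 (n - 1 - i) * f0) else monom 1 (m0 - (i - n)) * g)"
  have "coeff (det (SMg k (m0 + n) (Rg (m0 + 1) n 0 f0 g))) (\<Sum>i<k. (if i < n - 0 then 1 else 0)) =
     det (SM k (m0 + n) (\<lambda>i. coeff (Rg (m0 + 1) n 0 f0 g i) (if i < n - 0 then 1 else 0)))"
    by (rule coeff_det_SMg, rule degree_Rg)
  also have "(\<Sum>i<k. (if i < n - 0 then 1 else 0)) = n" unfolding sum_ind k_def by simp
  also have "SM k (m0 + n) (\<lambda>i. coeff (Rg (m0 + 1) n 0 f0 g i) (if i < n - 0 then 1 else 0)) = SM k (m0 + n) r'"
    by (rule SMc_cong, auto simp: Rg_def r'_def)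
  finally have eq1: "coeff (det (SMg k (m0 + n) (Rg (m0 + 1) n 0 f0 g))) n = det (SM k (m0 + n) r')" .
  have k2: "k \<ge> 2" "n < k" using n unfolding k_def by auto
  have "det (SM k (m0 + n) r') = (\<Sum>i<k. SM k (m0 + n) r' $$ (i,0) * cofactor (SM k (m0 + n) r') i 0)"
    by (rule laplace_expansion_column[OF SMc_carrier], insert k2, auto)
  also have "\<dots> = (\<Sum>i<k. if i = n then cofactor (SM k (m0 + n) r') i 0 else 0)"
  proof (rule sum.cong[OF refl])
    fix i assume i: "i \<in> {..<k}"
    have "SM k (m0 + n) r' $$ (i,0) = [:coeff (r' i) (m0 + n):]" using i k2 by (auto simp: SMc_def)
    also have "coeff (r' i) (m0 + n) = (if i = n then 1 else 0)"
    proof (cases "i < n")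
      case True
      have "degree (monom 1 (n - 1 - i) * f0) < m0 + n" using degree_monom_mult_le[of "n - 1 - i" f0] f0 True by auto
      thus ?thesis using True unfolding r'_def by (auto simp: coeff_eq_0)
    next
      case False
      show ?thesis
      proof (cases "i = n")
        case True
        have "coeff (monom 1 m0 * g) (m0 + n) = coeff g n" by (simp add: coeff_monom_mult)
        thus ?thesis using True g unfolding r'_def by auto
      next
        case ne: False
        have "degree (monom 1 (m0 - (i - n)) * g) < m0 + n"
          using degree_monom_mult_le[of "m0 - (i - n)" g] g False ne i k2 unfolding k_def by auto
        thus ?thesis using False ne unfolding r'_def by (auto simp: coeff_eq_0)
      qed
    qed
    finally show "SM k (m0 + n) r' $$ (i,0) * cofactor (SM k (m0 + n) r') i 0 =
       (if i = n then cofactor (SM k (m0 + n) r') i 0 else 0)" by auto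
  qed
  also have "\<dots> = cofactor (SM k (m0 + n) r') n 0" using k2 by (simp add: sum.delta)
  also have "\<dots> = (-1)^n * det (mat_delete (SM k (m0 + n) r') n 0)" unfolding cofactor_def by simp
  also have "mat_delete (SM k (m0 + n) r') n 0 =
     SM (m0 + n) (m0 + n - 1) (\<lambda>i. smult (if i < n then -1 else 1) (rowp m0 n 0 f0 g i))"
  proof (rule eq_matI)
    fix i j assume "i < dim_row (SM (m0 + n) (m0 + n - 1) (\<lambda>i. smult (if i < n then -1 else 1) (rowp m0 n 0 f0 g i)))"
      "j < dim_col (SM (m0 + n) (m0 + n - 1) (\<lambda>i. smult (if i < n then -1 else 1) (rowp m0 n 0 f0 g i)))"
    hence i: "i < m0 + n" and j: "j < m0 + n" by auto
    have r'': "r' (if i < n then i else Suc i) = smult (if i < n then -1 else 1) (rowp m0 n 0 f0 g i)"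
      unfolding r'_def rowp_def using i by auto
    have "mat_delete (SM k (m0 + n) r') n 0 $$ (i,j) = SM k (m0 + n) r' $$ (if i < n then i else Suc i, Suc j)"
      unfolding mat_delete_def using i j k_def by simp
    also have "\<dots> = SM (m0 + n) (m0 + n - 1) (\<lambda>i. smult (if i < n then -1 else 1) (rowp m0 n 0 f0 g i)) $$ (i,j)"
      using i j r'' unfolding SMc_def k_def by auto
    finally show "mat_delete (SM k (m0 + n) r') n 0 $$ (i,j) = SM (m0 + n) (m0 + n - 1) (\<lambda>i. smult (if i < n then -1 else 1) (rowp m0 n 0 f0 g i)) $$ (i,j)" .
  qed (auto simp: mat_delete_def k_def)
  also have "det (SM (m0 + n) (m0 + n - 1) (\<lambda>i. smult (if i < n then -1 else 1) (rowp m0 n 0 f0 g i))) =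
     smult (\<Prod>i<m0 + n. (if i < n then -1 else 1)) (det (SM (m0 + n) (m0 + n - 1) (rowp m0 n 0 f0 g)))"
    by (rule SM_scale)
  also have "(\<Prod>i<m0 + n. (if i < n then -1 else 1)) = ((-1::'a) ^ n)" unfolding prod_ind by simp
  also have "det (SM (m0 + n) (m0 + n - 1) (rowp m0 n 0 f0 g)) = Sres 0 f0 g"
    unfolding Sres_SM f0 g(1) by simp
  finally have "det (SM k (m0 + n) r') = (-1)^n * smult ((-1)^n) (Sres 0 f0 g)" .
  also have "\<dots> = Sres 0 f0 g" by (cases "even n") auto
  finally show ?thesis using eq1 unfolding k_def by simp
qed

definition RY :: "'a::field set \<Rightarrow> 'a poly poly" where
  "RY S = (\<Prod>s\<in>S. [:[:-s:], 1:])"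

lemma RY_insert: "finite S \<Longrightarrow> c \<notin> S \<Longrightarrow> RY (insert c S) = [:[:-c:],1:] * RY S"
  unfolding RY_def by simp

lemma poly_RY: "finite S \<Longrightarrow> poly (RY S) [:c:] = [:Rv c S:]"
proof (induction S rule: finite_induct)
  case (insert x F)
  thus ?case by (simp add: RY_insert Rv_def algebra_simps)
qed (simp add: RY_def Rv_def)

lemma RY_monic: "finite S \<Longrightarrow> degree (RY S) = card S \<and> lead_coeff (RY S) = 1"
proof (induction S rule: finite_induct)
  case (insert c S)
  have d: "degree ([:[:-c:],1:] * RY S) = degree [:[:-c:],1:] + degree (RY S)"
    by (rule degree_mult_eq) (use insert in \<open>auto simp del: mult_pCons_left\<close>)
  have l: "lead_coeff ([:[:-c:],1:] * RY S) = lead_coeff [:[:-c:],1:] * lead_coeff (RY S)"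
    by (rule lead_coeff_mult)
  show ?case unfolding RY_insert[OF insert(1,2)] using d l insert(1,2) insert.IH
    by (simp del: mult_pCons_left) (metis insert.IH)
qed (simp add: RY_def)

lemma degree_RY[simp]: "finite S \<Longrightarrow> degree (RY S) = card S"
  using RY_monic by blast

lemma coeff_RY_top[simp]: "finite S \<Longrightarrow> coeff (RY S) (card S) = 1"
  using RY_monic by fastforce

lemma poly_zero_by_roots:
  fixes P :: "'a::field poly poly"
  assumes fin: "finite Z" and deg: "degree P < card Z" and z: "\<And>z. z \<in> Z \<Longrightarrow> poly P [:z:] = 0"
  shows "P = 0"
proof -
  have inj: "inj_on (\<lambda>z. [:z:]) Z" by (rule inj_onI) auto
  have "P = 0"
  proof (rule poly_eqI_degree[of "(\<lambda>z. [:z:]) ` Z"])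
    show "card ((\<lambda>z. [:z:]) ` Z) > degree P" using deg card_image[OF inj] by simp
    show "card ((\<lambda>z. [:z:]) ` Z) > degree (0 :: 'a poly poly)" using deg card_image[OF inj] by simp
  qed (use z in auto)
  thus ?thesis .
qed

lemma Sres0_Res:
  fixes A B :: "'a::field set"
  assumes A: "finite A" and B: "finite B" "B \<noteq> {}"
  shows "Sres 0 (Rpoly A) (Rpoly B) = [:Res A B:]"
  using A
proof (induction A rule: finite_induct)
  case empty
  have "degree (Rpoly B) \<ge> 1" using B by (simp add: Suc_le_eq card_gt_0_iff)
  thus ?case using Sres_one[of "Rpoly B"] by simp
next
  case (insert y A0)
  define m0 n where "m0 = card A0" and "n = card B"
  have n1: "n \<ge> 1" using B unfolding n_def by (simp add: Suc_le_eq card_gt_0_iff)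
  define S where "S = det (SMg (m0 + 1 + n) (m0 + n) (Rg (m0 + 1) n 0 (Rpoly A0) (Rpoly B)))"
  have evalS: "poly S [:c:] = Sres 0 (Rpoly A0 * [:-c,1:]) (Rpoly B)" for c
    using Sres_gen[of "Rpoly A0" m0 "Rpoly B" n 0 c] insert(1) B unfolding S_def m0_def n_def by simp
  have degS: "degree S \<le> n"
    using Sres_gen_degree[of 0 m0 n "m0 + n" "Rpoly A0" "Rpoly B"] unfolding S_def by simp
  have topS: "coeff S n = [:Res A0 B:]"
  proof -
    have "coeff (Rpoly B) (card B) = 1" using lead_coeff_Rpoly[OF B(1)] degree_Rpoly[OF B(1)] by metis
    thus ?thesis using Sres_gen_top[of "Rpoly A0" m0 "Rpoly B" n] insert(1,3) B n1 unfolding S_def m0_def n_def by simp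
  qed
  define T where "T = [:[:Res A0 B:]:] * RY B"
  have degT: "degree T \<le> n" unfolding T_def n_def
    by (rule order.trans[OF degree_mult_le], simp add: B)
  have topT: "coeff T n = [:Res A0 B:]" unfolding T_def n_def using B by simp
  have "S - T = 0"
  proof (rule poly_zero_by_roots[OF B(1)])
    have "degree (S - T) \<le> n" using degS degT by (simp add: degree_diff_le)
    moreover have "coeff (S - T) n = 0" using topS topT by simp
    ultimately have "degree (S - T) < n \<or> S - T = 0"
      by (metis le_neq_implies_less leading_coeff_0_iff)
    thus "degree (S - T) < card B" using n1 unfolding n_def by auto
  next
    fix b assume b: "b \<in> B"
    have "Rpoly B = [:-b,1:] * Rpoly (B - {b})"
      using Rpoly_insert[of "B - {b}" b] b B by (simp add: insert_absorb)
    hence "poly S [:b:] = Sres 0 ([:-b,1:] * Rpoly A0) ([:-b,1:] * Rpoly (B - {b}))"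
      unfolding evalS by (simp add: mult.commute)
    also have "\<dots> = 0" by (rule Sres_common_root0) auto
    finally have "poly S [:b:] = 0" .
    moreover have "poly T [:b:] = 0" unfolding T_def using b B by (simp add: poly_RY Rv_zero)
    ultimately show "poly (S - T) [:b:] = 0" by simp
  qed
  hence "S = T" by simp
  have "Sres 0 (Rpoly (insert y A0)) (Rpoly B) = poly S [:y:]"
    unfolding evalS Rpoly_insert[OF insert(1,2)] by (simp add: mult.commute)
  also have "\<dots> = [:Res A0 B * Rv y B:]" unfolding \<open>S = T\<close> T_def using B by (simp add: poly_RY)
  also have "\<dots> = [:Res (insert y A0) B:]" using Res_insert_left[OF insert(1,2)] by (simp add: mult.commute)
  finally show ?case .
qed

section \<open>The polynomial in the new root\<close>

definition cK :: "'a::field set \<Rightarrow> 'a set \<Rightarrow> 'a set \<Rightarrow> 'a set \<Rightarrow> 'a" where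
  "cK A B A' B' = Res A' B' * Res (A - A') (B - B') / (Res A' (A - A') * Res B' (B - B'))"

lemma SylT_cK: "SylT A B A' B' = smult (cK A B A' B') (Rpoly A' * Rpoly B')"
  unfolding SylT_def cK_def ..

definition P1 :: "'a::field set \<Rightarrow> 'a set \<Rightarrow> 'a set \<Rightarrow> 'a set \<Rightarrow> 'a poly poly" where
  "P1 A0 B A' B' = [: smult (cK A0 B A' B') (Rpoly A' * Rpoly B') :] * RY A' * RY B' * [:[:0,1:], -1:]"

definition P2 :: "'a::field set \<Rightarrow> 'a set \<Rightarrow> 'a set \<Rightarrow> 'a set \<Rightarrow> 'a poly poly" where
  "P2 A0 B A' B' = [: smult ((-1)^card A' * cK A0 B A' B') (Rpoly A' * Rpoly B') :] * RY (A0 - A') * RY (B - B')"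

definition Pgen :: "'a::field set \<Rightarrow> 'a set \<Rightarrow> nat \<Rightarrow> nat \<Rightarrow> 'a poly poly" where
  "Pgen A0 B p q = (if p = 0 then 0 else (\<Sum>A'\<in>Sub (p-1) A0. \<Sum>B'\<in>Sub q B. P1 A0 B A' B'))
     + (\<Sum>A'\<in>Sub p A0. \<Sum>B'\<in>Sub q B. P2 A0 B A' B')"

lemma const_mult_poly: "[:a:] * p = smult a p" by simp

lemma smult_sum_right: "smult a (\<Sum>i\<in>S. f i) = (\<Sum>i\<in>S. smult a (f i))"
  by (induct S rule: infinite_finite_induct) (auto simp: smult_add_right)

lemma poly_P1: "finite A' \<Longrightarrow> finite B' \<Longrightarrow> poly (P1 A0 B A' B') [:c:] =
   smult (cK A0 B A' B' * Rv c A' * Rv c B') (Rpoly A' * Rpoly B' * [:-c,1:])"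
proof -
  assume "finite A'" "finite B'"
  have e: "poly [:[:0,1:], -1:] [:c:] = [:-c,1:]" by simp
  show ?thesis unfolding P1_def poly_mult e poly_RY[OF \<open>finite A'\<close>] poly_RY[OF \<open>finite B'\<close>]
    by (simp only: poly_pCons poly_0 const_mult_poly mult_zero_right mult_zero_left add_0_right add_0_left mult_smult_left mult_smult_right
       smult_smult ac_simps)
qed

lemma poly_P2: "finite A0 \<Longrightarrow> finite B \<Longrightarrow> poly (P2 A0 B A' B') [:c:] =
   smult ((-1)^card A' * cK A0 B A' B' * Rv c (A0 - A') * Rv c (B - B')) (Rpoly A' * Rpoly B')"
  unfolding P2_def by (simp add: poly_RY algebra_simps)

lemma Sub_D: "X \<in> Sub k A \<Longrightarrow> X \<subseteq> A \<and> card X = k" unfolding Sub_def by auto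

lemma T1:
  assumes fin: "finite A0" "finite B" and c: "c \<notin> A0" and A'': "A'' \<subseteq> A0" and B': "B' \<subseteq> B"
  shows "smult (Rv c A0) (SylT (insert c A0) B (insert c A'') B') = poly (P1 A0 B A'' B') [:c:]"
proof -
  have fA'': "finite A''" using A'' fin finite_subset by auto
  have fB': "finite B'" using B' fin finite_subset by auto
  have cA'': "c \<notin> A''" using c A'' by auto
  have d1: "insert c A0 - insert c A'' = A0 - A''" using c by auto
  have r1: "Res (insert c A'') B' = Rv c B' * Res A'' B'" by (rule Res_insert_left[OF fA'' cA''])
  have r2: "Res (insert c A'') (A0 - A'') = Rv c (A0 - A'') * Res A'' (A0 - A'')"
    by (rule Res_insert_left[OF fA'' cA''])
  have r3: "Rv c A0 = Rv c A'' * Rv c (A0 - A'')" by (rule Rv_split[OF fin(1) A''])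
  have nz: "Rv c (A0 - A'') \<noteq> 0" "Res A'' (A0 - A'') \<noteq> 0" "Res B' (B - B') \<noteq> 0"
    using c by (auto intro!: Rv_nonzero Res_nonzero)
  have "Rv c A0 * cK (insert c A0) B (insert c A'') B' = cK A0 B A'' B' * Rv c A'' * Rv c B'"
    unfolding cK_def d1 r1 r2 r3 using nz by (simp add: field_simps)
  thus ?thesis unfolding SylT_cK poly_P1[OF fA'' fB'] Rpoly_insert[OF fA'' cA'']
    by (simp add: ac_simps del: mult_pCons_left mult_pCons_right)
qed

lemma T2:
  assumes fin: "finite A0" "finite B" and c: "c \<notin> A0" and A': "A' \<subseteq> A0" and B': "B' \<subseteq> B"
  shows "smult (Rv c A0) (SylT (insert c A0) B A' B') = poly (P2 A0 B A' B') [:c:]"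
proof -
  have fA': "finite A'" using A' fin finite_subset by auto
  have fB': "finite B'" using B' fin finite_subset by auto
  have cA': "c \<notin> A'" using c A' by auto
  have d1: "insert c A0 - A' = insert c (A0 - A')" using cA' by auto
  have fD: "finite (A0 - A')" using fin by auto
  have cD: "c \<notin> A0 - A'" using c by auto
  have r1: "Res (insert c (A0 - A')) (B - B') = Rv c (B - B') * Res (A0 - A') (B - B')"
    by (rule Res_insert_left[OF fD cD])
  have r2: "Res A' (insert c (A0 - A')) = (-1)^card A' * Rv c A' * Res A' (A0 - A')"
    unfolding Res_insert_right[OF fD cD] prod_minus_swap[OF fA'] ..
  have r3: "Rv c A0 = Rv c A' * Rv c (A0 - A')" by (rule Rv_split[OF fin(1) A'])
  have nz: "Rv c A' \<noteq> 0" "Res A' (A0 - A') \<noteq> 0" "Res B' (B - B') \<noteq> 0"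
    using cA' by (auto intro!: Rv_nonzero Res_nonzero)
  have pm: "((-1::'a)^card A') * (-1)^card A' = 1" by (simp add: power_mult_distrib[symmetric])
  have "Rv c A0 * cK (insert c A0) B A' B' = (-1)^card A' * cK A0 B A' B' * Rv c (A0 - A') * Rv c (B - B')"
    unfolding cK_def d1 r1 r2 r3 using nz pm by (simp add: field_simps)
  thus ?thesis unfolding SylT_cK poly_P2[OF fin] by simp
qed

lemma Pgen_eval:
  assumes fin: "finite A0" "finite B" and c: "c \<notin> A0"
  shows "poly (Pgen A0 B p q) [:c:] = smult (Rv c A0) (Syl p q (insert c A0) B)"
proof -
  have "smult (Rv c A0) (Syl p q (insert c A0) B) =
    (if p = 0 then 0 else (\<Sum>A'\<in>Sub (p-1) A0. \<Sum>B'\<in>Sub q B. smult (Rv c A0) (SylT (insert c A0) B (insert c A') B')))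
     + (\<Sum>A'\<in>Sub p A0. \<Sum>B'\<in>Sub q B. smult (Rv c A0) (SylT (insert c A0) B A' B'))"
    unfolding Syl_double sum_Sub_insert[OF fin(1) c] by (simp add: smult_sum_right smult_add_right)
  also have "\<dots> = poly (Pgen A0 B p q) [:c:]"
  proof -
    have 1: "(\<Sum>A'\<in>Sub (p-1) A0. \<Sum>B'\<in>Sub q B. smult (Rv c A0) (SylT (insert c A0) B (insert c A') B'))
       = poly (\<Sum>A'\<in>Sub (p-1) A0. \<Sum>B'\<in>Sub q B. P1 A0 B A' B') [:c:]"
      unfolding poly_sum by (intro sum.cong refl; auto simp: T1 fin c dest!: Sub_D)
    have 2: "(\<Sum>A'\<in>Sub p A0. \<Sum>B'\<in>Sub q B. smult (Rv c A0) (SylT (insert c A0) B A' B'))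
       = poly (\<Sum>A'\<in>Sub p A0. \<Sum>B'\<in>Sub q B. P2 A0 B A' B') [:c:]"
      unfolding poly_sum by (intro sum.cong refl; auto simp: T2 fin c dest!: Sub_D)
    show ?thesis unfolding Pgen_def poly_add 1 2 by simp
  qed
  finally show ?thesis ..
qed

lemma sum_Sub_remove:
  assumes "finite A" "a \<in> A"
  shows "(\<Sum>X\<in>Sub p A. h X) =
    (if p = 0 then 0 else (\<Sum>X\<in>Sub (p-1) (A - {a}). h (insert a X))) + (\<Sum>X\<in>Sub p (A - {a}). h X)"
proof -
  have "A = insert a (A - {a})" using assms by auto
  hence "(\<Sum>X\<in>Sub p A. h X) = (\<Sum>X\<in>Sub p (insert a (A - {a})). h X)" by simp
  also have "\<dots> = (if p = 0 then 0 else (\<Sum>X\<in>Sub (p-1) (A - {a}). h (insert a X))) + (\<Sum>X\<in>Sub p (A - {a}). h X)"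
    by (rule sum_Sub_insert) (use assms in auto)
  finally show ?thesis .
qed

lemma T12:
  assumes fin: "finite A0" "finite B" and a: "a \<in> A0" "a \<notin> A''" and A'': "A'' \<subseteq> A0" "card A'' = p - 1"
    and p: "p \<ge> 1" and B': "B' \<subseteq> B"
  shows "poly (P1 A0 B A'' B') [:a:] + poly (P2 A0 B (insert a A'') B') [:a:] = 0"
proof -
  have fA'': "finite A''" using A'' fin finite_subset by auto
  have fB': "finite B'" using B' fin finite_subset by auto
  define C where "C = A0 - insert a A''"
  have fC: "finite C" using fin unfolding C_def by auto
  have aC: "a \<notin> C" unfolding C_def by auto
  have cd: "A0 - A'' = insert a C" using a A'' unfolding C_def by auto
  have cardi: "card (insert a A'') = p" using A'' a fA'' p by auto
  have r1: "Res (insert a C) (B - B') = Rv a (B - B') * Res C (B - B')" by (rule Res_insert_left[OF fC aC])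
  have r2: "Res A'' (insert a C) = (-1)^(p - 1) * Rv a A'' * Res A'' C"
    unfolding Res_insert_right[OF fC aC] prod_minus_swap[OF fA''] A''(2) ..
  have r3: "Res (insert a A'') B' = Rv a B' * Res A'' B'" by (rule Res_insert_left[OF fA'' a(2)])
  have r4: "Res (insert a A'') C = Rv a C * Res A'' C" by (rule Res_insert_left[OF fA'' a(2)])
  have nz: "Rv a A'' \<noteq> 0" "Rv a C \<noteq> 0" "Res A'' C \<noteq> 0" "Res B' (B - B') \<noteq> 0"
    using a aC by (auto intro!: Rv_nonzero Res_nonzero simp: C_def)
  have pm: "(-1::'a)^p = - ((-1)^(p - 1))" using p by (cases p) auto
  have pm2: "((-1::'a)^(p - 1)) * ((-1)^(p - 1)) = 1" by (simp add: power_mult_distrib[symmetric])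
  have sc: "cK A0 B A'' B' * Rv a A'' * Rv a B' +
     (-1)^p * cK A0 B (insert a A'') B' * Rv a C * Rv a (B - B') = 0"
    unfolding cK_def cd C_def[symmetric] r1 r2 r3 r4 pm using nz pm2
    by (simp add: field_simps)
  show ?thesis unfolding poly_P1[OF fA'' fB'] poly_P2[OF fin] Rpoly_insert[OF fA'' a(2)] cardi C_def[symmetric]
  proof -
    have "smult (cK A0 B A'' B' * Rv a A'' * Rv a B') (Rpoly A'' * Rpoly B' * [:- a, 1:]) +
      smult ((- 1) ^ p * cK A0 B (insert a A'') B' * Rv a C * Rv a (B - B')) ([:- a, 1:] * Rpoly A'' * Rpoly B')
      = smult (cK A0 B A'' B' * Rv a A'' * Rv a B' +
     (-1)^p * cK A0 B (insert a A'') B' * Rv a C * Rv a (B - B')) (Rpoly A'' * Rpoly B' * [:- a, 1:])"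
      by (simp add: smult_add_left ac_simps del: mult_pCons_left mult_pCons_right)
    thus "smult (cK A0 B A'' B' * Rv a A'' * Rv a B') (Rpoly A'' * Rpoly B' * [:- a, 1:]) +
      smult ((- 1) ^ p * cK A0 B (insert a A'') B' * Rv a C * Rv a (B - B')) ([:- a, 1:] * Rpoly A'' * Rpoly B') = 0"
      unfolding sc by simp
  qed
qed

lemma Pgen_root:
  assumes fin: "finite A0" "finite B" and a: "a \<in> A0"
  shows "poly (Pgen A0 B p q) [:a:] = 0"
proof -
  define A1 where "A1 = A0 - {a}"
  have fA1: "finite A1" using fin unfolding A1_def by auto
  have v2: "poly (P2 A0 B A' B') [:a:] = 0" if "A' \<in> Sub p A1" for A' B'
  proof -
    have "a \<in> A0 - A'" using that a unfolding Sub_def A1_def by auto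
    thus ?thesis unfolding poly_P2[OF fin] using fin by (simp add: Rv_zero)
  qed
  have v1: "poly (P1 A0 B (insert a A') B') [:a:] = 0" if "A' \<in> Sub k A1" "finite B'" for A' B' k
  proof -
    have "finite (insert a A')" using that fA1 unfolding Sub_def by (auto intro: finite_subset)
    thus ?thesis unfolding poly_P1[OF \<open>finite (insert a A')\<close> that(2)] by (simp add: Rv_zero)
  qed
  have "poly (Pgen A0 B p q) [:a:] =
     (if p = 0 then 0 else (\<Sum>A'\<in>Sub (p-1) A0. \<Sum>B'\<in>Sub q B. poly (P1 A0 B A' B') [:a:]))
     + (\<Sum>A'\<in>Sub p A0. \<Sum>B'\<in>Sub q B. poly (P2 A0 B A' B') [:a:])"
    unfolding Pgen_def by (simp add: poly_sum)
  also have "(\<Sum>A'\<in>Sub p A0. \<Sum>B'\<in>Sub q B. poly (P2 A0 B A' B') [:a:]) =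
    (if p = 0 then 0 else (\<Sum>A'\<in>Sub (p-1) A1. \<Sum>B'\<in>Sub q B. poly (P2 A0 B (insert a A') B') [:a:]))"
    unfolding sum_Sub_remove[OF fin(1) a] A1_def[symmetric] using v2 by simp
  also have "(\<Sum>A'\<in>Sub (p-1) A0. \<Sum>B'\<in>Sub q B. poly (P1 A0 B A' B') [:a:]) =
    (\<Sum>A'\<in>Sub (p-1) A1. \<Sum>B'\<in>Sub q B. poly (P1 A0 B A' B') [:a:])"
  proof -
    have "(\<Sum>A'\<in>Sub (p-1-1) A1. \<Sum>B'\<in>Sub q B. poly (P1 A0 B (insert a A') B') [:a:]) = 0"
      by (intro sum.neutral ballI, rule v1, auto dest!: Sub_D intro: finite_subset[OF _ fin(2)])
    thus ?thesis unfolding sum_Sub_remove[OF fin(1) a] A1_def[symmetric] by simp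
  qed
  finally have "poly (Pgen A0 B p q) [:a:] = (if p = 0 then 0 else
     (\<Sum>A'\<in>Sub (p-1) A1. \<Sum>B'\<in>Sub q B. poly (P1 A0 B A' B') [:a:] + poly (P2 A0 B (insert a A') B') [:a:]))"
    by (simp add: sum.distrib)
  also have "\<dots> = 0"
  proof (cases "p = 0")
    case False
    have "(\<Sum>A'\<in>Sub (p-1) A1. \<Sum>B'\<in>Sub q B. poly (P1 A0 B A' B') [:a:] + poly (P2 A0 B (insert a A') B') [:a:]) = 0"
    proof (intro sum.neutral ballI)
      fix A' B' assume "A' \<in> Sub (p-1) A1" "B' \<in> Sub q B"
      thus "poly (P1 A0 B A' B') [:a:] + poly (P2 A0 B (insert a A') B') [:a:] = 0"
        using False by (intro T12[OF fin a]) (auto simp: A1_def dest!: Sub_D)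
    qed
    thus ?thesis using False by simp
  qed simp
  finally show ?thesis .
qed

lemma Pgen_degree:
  assumes fin: "finite A0" "finite B"
  shows "degree (Pgen A0 B p q) \<le> max (p + q) (card A0 + card B - (p + q))"
proof -
  have d1: "degree (P1 A0 B A' B') \<le> p + q" if "A' \<in> Sub (p-1) A0" "B' \<in> Sub q B" "p \<noteq> 0" for A' B'
  proof -
    have f: "finite A'" "finite B'" using that fin by (auto dest!: Sub_D intro: finite_subset)
    have "degree (P1 A0 B A' B') \<le> 0 + card A' + card B' + 1" unfolding P1_def
      by (intro order.trans[OF degree_mult_le] add_mono, auto simp: f)
    thus ?thesis using that by (auto dest!: Sub_D)
  qed
  have d2: "degree (P2 A0 B A' B') \<le> card A0 + card B - (p + q)" if "A' \<in> Sub p A0" "B' \<in> Sub q B" for A' B'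
  proof -
    have f: "finite A'" "finite B'" "A' \<subseteq> A0" "B' \<subseteq> B" "card A' = p" "card B' = q"
      using that fin by (auto dest!: Sub_D intro: finite_subset)
    have "degree (P2 A0 B A' B') \<le> 0 + card (A0 - A') + card (B - B')" unfolding P2_def
      by (intro order.trans[OF degree_mult_le] add_mono, auto simp: f fin)
    also have "0 + card (A0 - A') + card (B - B') = card A0 + card B - (p + q)"
    proof -
      have "card (A0 - A') = card A0 - p" using f fin by (simp add: card_Diff_subset)
      moreover have "card (B - B') = card B - q" using f fin by (simp add: card_Diff_subset)
      ultimately show ?thesis
        using f card_mono[OF fin(1) f(3)] card_mono[OF fin(2) f(4)] by auto
    qed
    finally show ?thesis .
  qed
  show ?thesis unfolding Pgen_def
    apply (rule order.trans[OF degree_add_le_max])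
    apply (rule max.mono)
     apply (cases "p = 0", simp)
     apply (simp, (rule degree_sum_le, simp add: fin)+, rule d1, auto)
    apply ((rule degree_sum_le, simp add: fin)+, rule d2, auto)
    done
qed





section \<open>Common roots\<close>

lemma TA:
  assumes fin: "finite A0" "finite B0" and c: "c \<notin> A0" "c \<notin> B0"
    and A'': "A'' \<subseteq> A0" and B': "B' \<subseteq> B0"
  shows "SylT (insert c A0) (insert c B0) (insert c A'') B' =
     smult ((-1)^(card B' + card (A0 - A''))) ([:-c,1:] * SylT A0 B0 A'' B')"
proof -
  have fA'': "finite A''" using A'' fin finite_subset by auto
  have fB': "finite B'" using B' fin finite_subset by auto
  have cA'': "c \<notin> A''" "c \<notin> A0 - A''" using c A'' by auto
  have cB': "c \<notin> B'" "c \<notin> B0 - B'" using c B' by auto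
  have d1: "insert c A0 - insert c A'' = A0 - A''" using c by auto
  have d2: "insert c B0 - B' = insert c (B0 - B')" using cB' by auto
  have fD: "finite (A0 - A'')" "finite (B0 - B')" using fin by auto
  have r1: "Res (insert c A'') B' = Rv c B' * Res A'' B'" by (rule Res_insert_left[OF fA'' cA''(1)])
  have r2: "Res (A0 - A'') (insert c (B0 - B')) = (-1)^card (A0 - A'') * Rv c (A0 - A'') * Res (A0 - A'') (B0 - B')"
    unfolding Res_insert_right[OF fD(2) cB'(2)] prod_minus_swap[OF fD(1)] ..
  have r3: "Res (insert c A'') (A0 - A'') = Rv c (A0 - A'') * Res A'' (A0 - A'')"
    by (rule Res_insert_left[OF fA'' cA''(1)])
  have r4: "Res B' (insert c (B0 - B')) = (-1)^card B' * Rv c B' * Res B' (B0 - B')"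
    unfolding Res_insert_right[OF fD(2) cB'(2)] prod_minus_swap[OF fB'] ..
  have nz: "Rv c B' \<noteq> 0" "Rv c (A0 - A'') \<noteq> 0" "Res A'' (A0 - A'') \<noteq> 0" "Res B' (B0 - B') \<noteq> 0"
    using cA'' cB' by (auto intro!: Rv_nonzero Res_nonzero)
  have pm: "((-1::'a)^card B') * (-1)^card B' = 1" by (simp add: power_mult_distrib[symmetric])
  have "cK (insert c A0) (insert c B0) (insert c A'') B' = (-1)^(card B' + card (A0 - A'')) * cK A0 B0 A'' B'"
    unfolding cK_def d1 d2 r1 r2 r3 r4 power_add using nz pm by (simp add: field_simps)
  thus ?thesis unfolding SylT_cK Rpoly_insert[OF fA'' cA''(1)]
    by (simp add: ac_simps del: mult_pCons_left mult_pCons_right)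
qed

lemma TB:
  assumes fin: "finite A0" "finite B0" and c: "c \<notin> A0" "c \<notin> B0"
    and A': "A' \<subseteq> A0" and B'': "B'' \<subseteq> B0"
  shows "SylT (insert c A0) (insert c B0) A' (insert c B'') = [:-c,1:] * SylT A0 B0 A' B''"
proof -
  have fA': "finite A'" using A' fin finite_subset by auto
  have fB'': "finite B''" using B'' fin finite_subset by auto
  have cA': "c \<notin> A'" "c \<notin> A0 - A'" using c A' by auto
  have cB'': "c \<notin> B''" "c \<notin> B0 - B''" using c B'' by auto
  have d1: "insert c B0 - insert c B'' = B0 - B''" using c by auto
  have d2: "insert c A0 - A' = insert c (A0 - A')" using cA' by auto
  have fD: "finite (A0 - A')" "finite (B0 - B'')" using fin by auto
  have r1: "Res A' (insert c B'') = (\<Prod>a\<in>A'. a - c) * Res A' B''" by (rule Res_insert_right[OF fB'' cB''(1)])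
  have r2: "Res (insert c (A0 - A')) (B0 - B'') = Rv c (B0 - B'') * Res (A0 - A') (B0 - B'')"
    by (rule Res_insert_left[OF fD(1) cA'(2)])
  have r3: "Res A' (insert c (A0 - A')) = (\<Prod>a\<in>A'. a - c) * Res A' (A0 - A')"
    by (rule Res_insert_right[OF fD(1) cA'(2)])
  have r4: "Res (insert c B'') (B0 - B'') = Rv c (B0 - B'') * Res B'' (B0 - B'')"
    by (rule Res_insert_left[OF fB'' cB''(1)])
  have nz: "(\<Prod>a\<in>A'. a - c) \<noteq> 0" "Rv c (B0 - B'') \<noteq> 0" "Res A' (A0 - A') \<noteq> 0" "Res B'' (B0 - B'') \<noteq> 0"
    using cA' cB'' fA' by (auto intro!: Rv_nonzero Res_nonzero simp: prod_zero_iff)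
  have "cK (insert c A0) (insert c B0) A' (insert c B'') = cK A0 B0 A' B''"
    unfolding cK_def d1 d2 r1 r2 r3 r4 using nz by (simp add: field_simps)
  thus ?thesis unfolding SylT_cK Rpoly_insert[OF fB'' cB''(1)]
    by (simp add: ac_simps del: mult_pCons_left mult_pCons_right)
qed

lemma Syl_common:
  assumes fin: "finite A0" "finite B0" and c: "c \<notin> A0" "c \<notin> B0"
  shows "Syl p q (insert c A0) (insert c B0) = [:-c,1:] *
     ((if p = 0 then 0 else smult ((-1)^(q + (card A0 + 1 - p))) (Syl (p-1) q A0 B0))
      + (if q = 0 then 0 else Syl p (q-1) A0 B0))"
proof -
  define A B where "A = insert c A0" and "B = insert c B0"
  have z1: "SylT A B (insert c A') (insert c B') = 0" if "A' \<subseteq> A0" "B' \<subseteq> B0" for A' B'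
  proof -
    have "Res (insert c A') (insert c B') = 0"
      using that fin by (intro Res_zero[of _ _ c]) (auto intro: finite_subset)
    thus ?thesis unfolding SylT_def by simp
  qed
  have z2: "SylT A B A' B' = 0" if "A' \<subseteq> A0" "B' \<subseteq> B0" for A' B'
  proof -
    have "Res (A - A') (B - B') = 0"
      using that fin c unfolding A_def B_def by (intro Res_zero[of _ _ c]) auto
    thus ?thesis unfolding SylT_def by simp
  qed
  have s0: "Syl p q A B = (if p = 0 then 0 else (\<Sum>A'\<in>Sub (p-1) A0. \<Sum>B'\<in>Sub q B. SylT A B (insert c A') B'))
      + (\<Sum>A'\<in>Sub p A0. \<Sum>B'\<in>Sub q B. SylT A B A' B')"
    unfolding Syl_double A_def sum_Sub_insert[OF fin(1) c(1)] ..
  have e1: "(\<Sum>A'\<in>Sub (p-1) A0. \<Sum>B'\<in>Sub q B. SylT A B (insert c A') B') =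
     (\<Sum>A'\<in>Sub (p-1) A0. \<Sum>B'\<in>Sub q B0. SylT A B (insert c A') B')"
  proof (rule sum.cong[OF refl])
    fix A' assume "A' \<in> Sub (p-1) A0"
    hence A': "A' \<subseteq> A0" by (auto dest: Sub_D)
    have zz: "(\<Sum>X\<in>Sub (q-1) B0. SylT A B (insert c A') (insert c X)) = 0"
      by (intro sum.neutral ballI z1[OF A']) (auto dest!: Sub_D)
    define h where "h = (\<lambda>B'. SylT A B (insert c A') B')"
    have "(\<Sum>B'\<in>Sub q B. h B') = (if q = 0 then 0 else (\<Sum>X\<in>Sub (q-1) B0. h (insert c X))) + (\<Sum>X\<in>Sub q B0. h X)"
      unfolding B_def by (rule sum_Sub_insert[OF fin(2) c(2)])
    thus "(\<Sum>B'\<in>Sub q B. SylT A B (insert c A') B') = (\<Sum>B'\<in>Sub q B0. SylT A B (insert c A') B')"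
      using zz unfolding h_def by simp
  qed
  have e2: "(\<Sum>A'\<in>Sub p A0. \<Sum>B'\<in>Sub q B. SylT A B A' B') =
      (\<Sum>A'\<in>Sub p A0. (if q = 0 then 0 else (\<Sum>B'\<in>Sub (q-1) B0. SylT A B A' (insert c B'))))"
  proof (rule sum.cong[OF refl])
    fix A' assume "A' \<in> Sub p A0"
    hence A': "A' \<subseteq> A0" by (auto dest: Sub_D)
    have zz: "(\<Sum>X\<in>Sub q B0. SylT A B A' X) = 0"
      by (intro sum.neutral ballI z2[OF A']) (auto dest!: Sub_D)
    define h where "h = (\<lambda>B'. SylT A B A' B')"
    have "(\<Sum>B'\<in>Sub q B. h B') = (if q = 0 then 0 else (\<Sum>X\<in>Sub (q-1) B0. h (insert c X))) + (\<Sum>X\<in>Sub q B0. h X)"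
      unfolding B_def by (rule sum_Sub_insert[OF fin(2) c(2)])
    thus "(\<Sum>B'\<in>Sub q B. SylT A B A' B') = (if q = 0 then 0 else (\<Sum>B'\<in>Sub (q-1) B0. SylT A B A' (insert c B')))"
      using zz unfolding h_def by simp
  qed
  have e3: "(\<Sum>A'\<in>Sub (p-1) A0. \<Sum>B'\<in>Sub q B0. SylT A B (insert c A') B') =
     smult ((-1)^(q + (card A0 + 1 - p))) ([:-c,1:] * Syl (p-1) q A0 B0)" if "p \<noteq> 0"
  proof -
    have "(\<Sum>A'\<in>Sub (p-1) A0. \<Sum>B'\<in>Sub q B0. SylT A B (insert c A') B') =
       (\<Sum>A'\<in>Sub (p-1) A0. \<Sum>B'\<in>Sub q B0. [:-c,1:] * smult ((-1)^(q + (card A0 + 1 - p))) (SylT A0 B0 A' B'))"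
    proof (intro sum.cong refl)
      fix A' B' assume A': "A' \<in> Sub (p-1) A0" and B': "B' \<in> Sub q B0"
      have A'D: "A' \<subseteq> A0" "card A' = p - 1" and B'D: "B' \<subseteq> B0" "card B' = q"
        using A' B' by (auto dest!: Sub_D)
      have fA': "finite A'" using A'D fin finite_subset by auto
      have "card (A0 - A') = card A0 - (p - 1)" using A'D fin fA' by (simp add: card_Diff_subset)
      moreover have "card A' \<le> card A0" using A'D fin by (intro card_mono)
      ultimately have e: "card B' + card (A0 - A') = q + (card A0 + 1 - p)"
        using A'D B'D that by linarith
      show "SylT A B (insert c A') B' = [:-c,1:] * smult ((-1)^(q + (card A0 + 1 - p))) (SylT A0 B0 A' B')"
        unfolding A_def B_def TA[OF fin c A'D(1) B'D(1), unfolded e] by (simp add: mult_smult_right)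
    qed
    also have "\<dots> = smult ((-1)^(q + (card A0 + 1 - p))) ([:-c,1:] * Syl (p-1) q A0 B0)"
      unfolding Syl_double sum_distrib_left smult_sum_right mult_smult_right ..
    finally show ?thesis .
  qed
  have e4: "(\<Sum>A'\<in>Sub p A0. \<Sum>B'\<in>Sub (q-1) B0. SylT A B A' (insert c B')) = [:-c,1:] * Syl p (q-1) A0 B0"
  proof -
    have "(\<Sum>A'\<in>Sub p A0. \<Sum>B'\<in>Sub (q-1) B0. SylT A B A' (insert c B')) =
      (\<Sum>A'\<in>Sub p A0. \<Sum>B'\<in>Sub (q-1) B0. [:-c,1:] * SylT A0 B0 A' B')"
      unfolding A_def B_def by (intro sum.cong refl, rule TB[OF fin c], auto dest!: Sub_D)
    also have "\<dots> = [:-c,1:] * Syl p (q-1) A0 B0" unfolding Syl_double sum_distrib_left ..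
    finally show ?thesis .
  qed
  have e2': "(\<Sum>A'\<in>Sub p A0. \<Sum>B'\<in>Sub q B. SylT A B A' B') =
     (if q = 0 then 0 else [:-c,1:] * Syl p (q-1) A0 B0)"
    unfolding e2 e4[symmetric] by (cases "q = 0") simp_all
  have "Syl p q A B = [:-c,1:] *
     ((if p = 0 then 0 else smult ((-1)^(q + (card A0 + 1 - p))) (Syl (p-1) q A0 B0))
      + (if q = 0 then 0 else Syl p (q-1) A0 B0))"
  proof (cases "p = 0")
    case True thus ?thesis unfolding s0 e1 e2' by (cases "q = 0") (simp_all add: distrib_left del: mult_pCons_left mult_pCons_right)
  next
    case False thus ?thesis unfolding s0 e1 e2' e3[OF False]
      by (cases "q = 0") (simp_all add: distrib_left mult_smult_right del: mult_pCons_left mult_pCons_right)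
  qed
  thus ?thesis unfolding A_def B_def .
qed

lemma Sub_0_empty: "Sub 0 {} = {{}}" unfolding Sub_def by auto

lemma Sub_big: assumes "finite A" "card A < k" shows "Sub k A = {}"
proof -
  have "X \<notin> Sub k A" for X
  proof
    assume "X \<in> Sub k A"
    hence X: "X \<subseteq> A" "card X = k" by (auto dest: Sub_D)
    have "card X \<le> card A" by (rule card_mono[OF assms(1) X(1)])
    thus False using X(2) assms(2) by linarith
  qed
  thus ?thesis by blast
qed

lemma Syl_big: assumes "finite A" "card A < p" shows "Syl p q A B = 0"
  unfolding Syl_double Sub_big[OF assms] by simp

lemma Syl_empty_left: "Syl 0 q {} B = (\<Sum>X\<in>Sub q B. smult (1 / Res X (B - X)) (Rpoly X))"
  unfolding Syl_double Sub_0_empty SylT_def by simp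

lemma Syl_empty_right: "Syl q 0 B {} = (\<Sum>X\<in>Sub q B. smult (1 / Res X (B - X)) (Rpoly X))"
  unfolding Syl_double Sub_0_empty SylT_def by simp

lemma Syl_lagrange:
  fixes B :: "'a::field set"
  assumes fin: "finite B" and n: "card B \<ge> 1"
  shows "Syl 0 (card B - 1) {} B = [:(-1)^(card B - 1):]"
proof -
  define n where "n = card B"
  define E where "E = (\<Sum>X\<in>Sub (n - 1) B. smult (1 / Res X (B - X)) (Rpoly X))"
  have "E = [:(-1)^(n - 1):]"
  proof (rule poly_eqI_degree[of B])
    fix b assume b: "b \<in> B"
    have cB: "card (B - {b}) = n - 1" using b fin unfolding n_def by simp
    have "poly E b = (\<Sum>X\<in>Sub (n - 1) B. Rv b X / Res X (B - X))"
      unfolding E_def poly_sum by (simp add: poly_Rpoly)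
    also have "\<dots> = Rv b (B - {b}) / Res (B - {b}) (B - (B - {b}))"
    proof -
      have mem: "B - {b} \<in> Sub (n - 1) B" using cB unfolding Sub_def by auto
      have z: "(\<Sum>X\<in>Sub (n - 1) B - {B - {b}}. Rv b X / Res X (B - X)) = 0"
      proof (rule sum.neutral, rule ballI)
        fix X assume "X \<in> Sub (n - 1) B - {B - {b}}"
        hence X: "X \<in> Sub (n - 1) B" "X \<noteq> B - {b}" by auto
        have "b \<in> X"
        proof (rule ccontr)
          assume "b \<notin> X"
          hence "X \<subseteq> B - {b}" using X by (auto dest: Sub_D)
          moreover have "card X = card (B - {b})" using X cB by (auto dest: Sub_D)
          ultimately have "X = B - {b}" using fin by (intro card_subset_eq) auto
          thus False using X by simp
        qed
        moreover have "finite X" using X fin by (auto dest!: Sub_D intro: finite_subset)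
        ultimately show "Rv b X / Res X (B - X) = 0" by (simp add: Rv_zero)
      qed
      show ?thesis unfolding sum.remove[OF finite_Sub[OF fin] mem] z by simp
    qed
    also have "B - (B - {b}) = {b}" using b by auto
    also have "Res (B - {b}) {b} = (-1)^(n - 1) * Rv b (B - {b})"
      unfolding Res_alt using prod_minus_swap[of "B - {b}" b] fin cB by simp
    also have "Rv b (B - {b}) / ((-1)^(n - 1) * Rv b (B - {b})) = (-1)^(n - 1)"
    proof -
      have "Rv b (B - {b}) \<noteq> 0" by (rule Rv_nonzero) auto
      moreover have "((-1::'a)^(n - 1)) * (-1)^(n - 1) = 1" by (simp add: power_mult_distrib[symmetric])
      ultimately show ?thesis by (simp add: field_simps)
    qed
    finally show "poly E b = poly [:(-1)^(n - 1):] b" by simp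
  next
    have "degree E \<le> n - 1" unfolding E_def
    proof (rule degree_sum_le, simp add: fin, rule order.trans[OF degree_smult_le])
      fix X assume "X \<in> Sub (n - 1) B"
      hence "X \<subseteq> B" "card X = n - 1" by (auto dest: Sub_D)
      moreover hence "finite X" using fin finite_subset by auto
      ultimately show "degree (Rpoly X) \<le> n - 1" by simp
    qed
    thus "degree E < card B" using n unfolding n_def by simp
  qed (use n in auto)
  thus ?thesis unfolding Syl_empty_left E_def n_def .
qed

lemma Syl_empty_zero:
  fixes B :: "'a::field set"
  assumes fin: "finite B" and q: "1 \<le> q" "q + 2 \<le> card B"
  shows "Syl 0 q {} B = 0"
proof -
  obtain y where y: "y \<in> B" using q by fastforce
  define A0 where "A0 = B - {y}"
  have fA0: "finite A0" and yA0: "y \<notin> A0" and cA0: "card A0 = card B - 1"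
    using fin y unfolding A0_def by auto
  have "Pgen A0 {} q 0 = 0"
  proof (rule poly_zero_by_roots[OF fA0])
    have "degree (Pgen A0 {} q 0) \<le> max q (card A0 - q)"
      using Pgen_degree[OF fA0, of "{}" q 0] by simp
    thus "degree (Pgen A0 {} q 0) < card A0" using q cA0 by auto
  qed (rule Pgen_root[OF fA0], auto)
  hence "smult (Rv y A0) (Syl q 0 (insert y A0) {}) = 0"
    using Pgen_eval[OF fA0 _ yA0, of "{}" q 0] by simp
  moreover have "Rv y A0 \<noteq> 0" by (rule Rv_nonzero[OF yA0])
  moreover have "insert y A0 = B" using y unfolding A0_def by auto
  ultimately have "Syl q 0 B {} = 0" by simp
  thus ?thesis unfolding Syl_empty_left Syl_empty_right[symmetric] .
qed

definition Target :: "'a::field set \<Rightarrow> 'a set \<Rightarrow> nat \<Rightarrow> nat \<Rightarrow> 'a poly" where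
  "Target A B p q = (if p + q \<le> card A
     then smult ((-1)^(p * (card A - (p + q))) * of_nat ((p + q) choose p)) (Sres (p + q) (Rpoly A) (Rpoly B))
     else if p + q < card B - 1 then 0
     else smult ((-1)^((p + 1) * (card A + card B - 1)) * of_nat (card A choose p)) (Rpoly A))"

definition Hyp :: "'a::field set \<Rightarrow> 'a set \<Rightarrow> nat \<Rightarrow> nat \<Rightarrow> bool" where
  "Hyp A B p q \<longleftrightarrow> finite A \<and> finite B \<and> p \<le> card A \<and> q \<le> card B \<and> p + q \<le> card B - 1 \<and> card B \<ge> 1"

lemma Target_gen:
  fixes A0 B :: "'a::field set"
  assumes fin: "finite A0" "finite B" and n: "card B \<ge> 1" and d: "p + q \<le> card B - 1"
  shows "\<exists>T. degree T \<le> card B - (p + q) \<and> (\<forall>c. c \<notin> A0 \<longrightarrow> poly T [:c:] = Target (insert c A0) B p q)"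
proof -
  define m0 n d where "m0 = card A0" and "n = card B" and "d = p + q"
  have cins: "c \<notin> A0 \<Longrightarrow> card (insert c A0) = m0 + 1" for c using fin unfolding m0_def by simp
  have Rins: "c \<notin> A0 \<Longrightarrow> Rpoly (insert c A0) = Rpoly A0 * [:-c,1:]" for c
    using Rpoly_insert[OF fin(1)] by (simp add: mult.commute)
  show ?thesis
  proof (cases "d \<le> m0 + 1")
    case True
    define S1 where "S1 = det (SMg (m0 + 1 + n - 2 * d) (m0 + 1 + n - d - 1) (Rg (m0 + 1) n d (Rpoly A0) (Rpoly B)))"
    define lam :: 'a where "lam = (-1)^(p * (m0 + 1 - d)) * of_nat (d choose p)"
    show ?thesis
    proof (rule exI[of _ "smult [:lam:] S1"], intro conjI allI impI)
      show "degree (smult [:lam:] S1) \<le> card B - (p + q)"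
        using Sres_gen_degree[of d m0 n "m0 + 1 + n - d - 1" "Rpoly A0" "Rpoly B"] True d
        unfolding S1_def n_def d_def by (intro order.trans[OF degree_smult_le]) auto
      fix c assume c: "c \<notin> A0"
      have "poly S1 [:c:] = Sres d (Rpoly A0 * [:-c,1:]) (Rpoly B)"
        unfolding S1_def by (rule Sres_gen) (use fin in \<open>auto simp: m0_def n_def\<close>)
      thus "poly (smult [:lam:] S1) [:c:] = Target (insert c A0) B p q"
        unfolding Target_def cins[OF c] Rins[OF c] using True
        by (simp add: lam_def d_def)
    qed
  next
    case False
    note F = False
    show ?thesis
    proof (cases "d < n - 1")
      case True
      show ?thesis
        by (rule exI[of _ 0], insert F True, auto simp: Target_def cins d_def n_def m0_def)
    next
      case False
      define lam :: 'a where "lam = (-1)^((p + 1) * (m0 + 1 + n - 1)) * of_nat ((m0 + 1) choose p)"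
      show ?thesis
      proof (rule exI[of _ "smult [:lam:] ([:Rpoly A0:] * [:[:0,1:], -1:])"], intro conjI allI impI)
        have "degree (smult [:lam:] ([:Rpoly A0:] * [:[:0,1:], -1:])) \<le> 1"
          by (rule order.trans[OF degree_smult_le], rule order.trans[OF degree_mult_le], simp)
        then show "degree (smult [:lam:] ([:Rpoly A0:] * [:[:0,1:], -1:])) \<le> card B - (p + q)"
        proof -
          have "card B - (p + q) = 1" using False d n unfolding n_def d_def by arith
          thus ?thesis using \<open>degree (smult [:lam:] ([:Rpoly A0:] * [:[:0,1:], -1:])) \<le> 1\<close> by simp
        qed
        fix c assume c: "c \<notin> A0"
        have e: "poly [:[:0,1:], -1:] [:c:] = [:-c,1:]" by simp
        have "poly (smult [:lam:] ([:Rpoly A0:] * [:[:0,1:], -1:])) [:c:] = smult lam (Rpoly A0 * [:-c,1:])"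
          unfolding poly_smult poly_mult e by simp
        also have "\<dots> = Target (insert c A0) B p q"
          unfolding Target_def cins[OF c] Rins[OF c] using F False
          by (simp add: lam_def d_def n_def del: mult_pCons_left mult_pCons_right)
        finally show "poly (smult [:lam:] ([:Rpoly A0:] * [:[:0,1:], -1:])) [:c:] = Target (insert c A0) B p q" .
      qed
    qed
  qed
qed

lemma neg1_eq: "a = b + 2 * k \<Longrightarrow> (-1::'a::ring_1)^a = (-1)^b"
  by (simp add: power_add power_mult)

lemma SC1:
  assumes pq: "p + q = d" and d: "1 \<le> d" "d \<le> m0 + 1"
  shows "(if p = 0 then 0 else (-1)^(q + (m0 + 1 - p)) * ((-1)^((p - 1) * (m0 - (d - 1))) * of_nat ((d - 1) choose (p - 1))))
    + (if q = 0 then 0 else if p \<le> m0 then (-1)^(p * (m0 - (d - 1))) * of_nat ((d - 1) choose p) else 0)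
    = ((-1)^(p * (m0 + 1 - d)) * of_nat (d choose p) :: 'a::comm_ring_1)"
proof -
  define r where "r = m0 + 1 - d"
  have r1: "m0 - (d - 1) = r" using d unfolding r_def by auto
  show ?thesis
  proof (cases "p = 0")
    case True
    thus ?thesis using pq d by (auto simp: r1)
  next
    case False
    then obtain p' where p': "p = Suc p'" by (cases p) auto
    have e1: "(-1::'a)^(q + (m0 + 1 - p) + (p - 1) * r) = (-1)^(p * r)"
    proof (rule neg1_eq[of _ _ q])
      show "q + (m0 + 1 - p) + (p - 1) * r = p * r + 2 * q" using pq d unfolding r_def p' by auto
    qed
    have key: "(-1)^(q + (m0 + 1 - p)) * ((-1)^((p - 1) * r) * x) = (-1)^(p * r) * (x::'a)" for x
      using e1 by (metis (no_types) power_add mult.assoc)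
    show ?thesis
    proof (cases "q = 0")
      case True
      hence "p = d" using pq by auto
      thus ?thesis using key[of 1] False True unfolding r1 r_def[symmetric] by simp
    next
      case qF: False
      have "p \<le> m0" using pq d qF by auto
      obtain d' where d': "d = Suc d'" using d by (cases d) auto
      have ch: "of_nat (d choose p) = (of_nat ((d - 1) choose (p - 1)) + of_nat ((d - 1) choose p) :: 'a)"
        unfolding d' p' by simp
      show ?thesis unfolding r1 r_def[symmetric] key ch using False qF \<open>p \<le> m0\<close>
        by (simp add: distrib_left)
    qed
  qed
qed

lemma SC3:
  assumes pq: "p + q = n0" and pm: "p \<le> m0 + 1" and mn: "m0 + 1 < n0"
  shows "(if p = 0 then 0 else (-1)^(q + (m0 + 1 - p)) * ((-1)^((p - 1 + 1) * (m0 + n0 - 1)) * of_nat (m0 choose (p - 1))))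
    + (if p \<le> m0 then (-1)^((p + 1) * (m0 + n0 - 1)) * of_nat (m0 choose p) else 0)
    = ((-1)^((p + 1) * (m0 + 1 + (n0 + 1) - 1)) * of_nat ((m0 + 1) choose p) :: 'a::comm_ring_1)"
proof -
  define K where "K = m0 + n0 - 1"
  define P where "P = p * K"
  have K2: "m0 + 1 + (n0 + 1) - 1 = K + 2" using mn unfolding K_def by auto
  have eA: "(-1::'a)^((p + 1) * (K + 2)) = (-1)^(P + K)"
    by (rule neg1_eq[of _ _ "p + 1"]) (simp add: P_def algebra_simps)
  have eB: "(-1::'a)^((p + 1) * K) = (-1)^(P + K)" by (simp add: P_def algebra_simps)
  have eC: "(-1::'a)^(q + (m0 + 1 - p) + P) = (-1)^(P + K)"
  proof (cases "p = 0")
    case True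
    show ?thesis by (rule neg1_eq[of _ _ 1]) (use pq pm mn True in \<open>simp add: K_def\<close>)
  next
    case False
    have "(-1::'a)^(P + K) = (-1)^(q + (m0 + 1 - p) + P)"
      by (rule neg1_eq[of _ _ "p - 1"]) (use pq pm mn False in \<open>simp add: K_def\<close>)
    thus ?thesis by simp
  qed
  show ?thesis
  proof (cases "p = 0")
    case True
    thus ?thesis unfolding K2 K_def[symmetric] using eA eB by (simp add: P_def)
  next
    case False
    then obtain p' where p': "p = Suc p'" by (cases p) auto
    have pm1: "p - 1 + 1 = p" using False by auto
    have ch: "of_nat ((m0 + 1) choose p) = (of_nat (m0 choose (p - 1)) + of_nat (m0 choose p) :: 'a)"
      unfolding p' by simp
    have big: "\<not> p \<le> m0 \<Longrightarrow> m0 choose p = 0" by simp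
    have keyC: "(-1)^(q + (m0 + 1 - p)) * ((-1)^(p * K) * x) = (-1)^(P + K) * (x::'a)" for x
      using eC unfolding P_def by (metis (no_types) power_add mult.assoc)
    have zor: "p \<le> m0 \<or> m0 choose p = 0" by auto
    show ?thesis unfolding K2 K_def[symmetric] pm1 ch keyC eA eB using False zor
      by (elim disjE) (simp_all add: distrib_left binomial_eq_0)
  qed
qed

lemma Target1: "p + q \<le> card A \<Longrightarrow>
  Target A B p q = smult ((-1)^(p * (card A - (p + q))) * of_nat ((p + q) choose p)) (Sres (p + q) (Rpoly A) (Rpoly B))"
  unfolding Target_def by simp

lemma Target2: "card A < p + q \<Longrightarrow> p + q < card B - 1 \<Longrightarrow> Target A B p q = 0"
  unfolding Target_def by simp

lemma Target3: "card A < p + q \<Longrightarrow> \<not> p + q < card B - 1 \<Longrightarrow>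
  Target A B p q = smult ((-1)^((p + 1) * (card A + card B - 1)) * of_nat (card A choose p)) (Rpoly A)"
  unfolding Target_def by simp

lemma ND:
  fixes A B :: "'a::field set"
  assumes IH: "\<And>A' B' p' q'. card (A'::'a set) + card (B'::'a set) < card A + card B \<Longrightarrow> Hyp A' B' p' q' \<Longrightarrow>
      Syl p' q' A' B' = Target A' B' p' q'"
    and H: "Hyp A B p q" and c: "c \<in> A" "c \<in> B" and d1: "1 \<le> p + q"
  shows "Syl p q A B = Target A B p q"
proof -
  from H have fin: "finite A" "finite B" and pA: "p \<le> card A" and qB: "q \<le> card B"
    and dB: "p + q \<le> card B - 1" and nB: "card B \<ge> 1" unfolding Hyp_def by auto
  define A0 B0 where "A0 = A - {c}" and "B0 = B - {c}"
  have fin0: "finite A0" "finite B0" and cA0: "c \<notin> A0" and cB0: "c \<notin> B0"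
    and Aeq: "A = insert c A0" and Beq: "B = insert c B0"
    using fin c unfolding A0_def B0_def by auto
  define m0 n0 d where "m0 = card A0" and "n0 = card B0" and "d = p + q"
  have cA: "card A = m0 + 1" and cB: "card B = n0 + 1" unfolding m0_def n0_def Aeq Beq using fin0 cA0 cB0 by auto
  have n01: "1 \<le> n0" and dn0: "d \<le> n0" and pm: "p \<le> m0 + 1" and qn: "q \<le> n0" and d1': "1 \<le> d"
    using dB cB d1 pA cA unfolding d_def by auto
  have RA: "Rpoly A = [:-c,1:] * Rpoly A0" unfolding Aeq by (rule Rpoly_insert[OF fin0(1) cA0])
  have RB: "Rpoly B = [:-c,1:] * Rpoly B0" unfolding Beq by (rule Rpoly_insert[OF fin0(2) cB0])
  have less: "card A0 + card B0 < card A + card B" using cA cB unfolding m0_def n0_def by auto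
  define X1 where "X1 = (if p = 0 then 0 else smult ((-1)^(q + (m0 + 1 - p))) (Syl (p - 1) q A0 B0))"
  define X2 where "X2 = (if q = 0 then 0 else Syl p (q - 1) A0 B0)"
  have Sc: "Syl p q A B = [:-c,1:] * (X1 + X2)"
    unfolding X1_def X2_def m0_def Aeq Beq by (rule Syl_common[OF fin0 cA0 cB0])
  have IH1: "Syl (p - 1) q A0 B0 = Target A0 B0 (p - 1) q" if "p \<noteq> 0"
    by (rule IH[OF less], unfold Hyp_def, insert that fin0 pm qn dn0 n01, auto simp: m0_def[symmetric] n0_def[symmetric] d_def)
  have IH2: "Syl p (q - 1) A0 B0 = Target A0 B0 p (q - 1)" if "q \<noteq> 0" "p \<le> m0"
    by (rule IH[OF less], unfold Hyp_def, insert that fin0 pm qn dn0 n01, auto simp: m0_def[symmetric] n0_def[symmetric] d_def)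
  have Z2: "Syl p (q - 1) A0 B0 = 0" if "m0 < p"
    by (rule Syl_big[OF fin0(1)], insert that, simp add: m0_def)
  show ?thesis
  proof (cases "d \<le> m0 + 1")
    case R1: True
    define S' where "S' = Sres (d - 1) (Rpoly A0) (Rpoly B0)"
    have Sres_eq: "Sres d (Rpoly A) (Rpoly B) = [:-c,1:] * S'"
      unfolding RA RB S'_def
      by (rule Sres_common_root) (use fin0 R1 d1' dn0 in \<open>auto simp: m0_def n0_def\<close>)
    have X1e: "X1 = smult (if p = 0 then 0 else (-1)^(q + (m0 + 1 - p)) * ((-1)^((p - 1) * (m0 - (d - 1))) * of_nat ((d - 1) choose (p - 1)))) S'"
    proof (cases "p = 0")
      case False
      have e: "p - 1 + q = d - 1" using False unfolding d_def by auto
      have le: "p - 1 + q \<le> card A0" using e R1 d1' unfolding m0_def by auto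
      have m: "card A0 - (p - 1 + q) = m0 - (d - 1)" using e unfolding m0_def by simp
      show ?thesis unfolding X1_def IH1[OF False] Target1[OF le] m e
        using False by (simp add: S'_def m0_def)
    qed (simp add: X1_def)
    have X2e: "X2 = smult (if q = 0 then 0 else if p \<le> m0 then (-1)^(p * (m0 - (d - 1))) * of_nat ((d - 1) choose p) else 0) S'"
    proof (cases "q = 0")
      case False
      have e: "p + (q - 1) = d - 1" using False unfolding d_def by auto
      show ?thesis
      proof (cases "p \<le> m0")
        case True
        have le: "p + (q - 1) \<le> card A0" using e R1 d1' unfolding m0_def by auto
        have m: "card A0 - (p + (q - 1)) = m0 - (d - 1)" using e unfolding m0_def by simp
        show ?thesis unfolding X2_def IH2[OF False True] Target1[OF le] m e
          using False True by (simp add: S'_def m0_def)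
      qed (insert Z2 False, simp add: X2_def)
    qed (simp add: X2_def)
    have "X1 + X2 = smult ((-1)^(p * (m0 + 1 - d)) * of_nat (d choose p)) S'"
      unfolding X1e X2e smult_add_left[symmetric] SC1[OF d_def[symmetric] d1' R1] ..
    hence "Syl p q A B = smult ((-1)^(p * (m0 + 1 - d)) * of_nat (d choose p)) ([:-c,1:] * S')"
      unfolding Sc by (simp add: mult_smult_right)
    thus ?thesis unfolding Target1[of p q A B, unfolded cA, folded d_def, OF R1] Sres_eq .
  next
    case F: False
    show ?thesis
    proof (cases "d < n0")
      case R2: True
      have "X1 = 0"
      proof (cases "p = 0")
        case False
        have e: "p - 1 + q = d - 1" using False unfolding d_def by auto
        have "Target A0 B0 (p - 1) q = 0"
          by (rule Target2) (use e F R2 d1' in \<open>auto simp: m0_def n0_def\<close>)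
        thus ?thesis unfolding X1_def IH1[OF False] by simp
      qed (simp add: X1_def)
      moreover have "X2 = 0"
      proof (cases "q = 0")
        case False
        have e: "p + (q - 1) = d - 1" using False unfolding d_def by auto
        show ?thesis
        proof (cases "p \<le> m0")
          case True
          have "Target A0 B0 p (q - 1) = 0"
            by (rule Target2) (use e F R2 d1' in \<open>auto simp: m0_def n0_def\<close>)
          thus ?thesis unfolding X2_def IH2[OF False True] by simp
        qed (insert Z2 False, simp add: X2_def)
      qed (simp add: X2_def)
      ultimately show ?thesis unfolding Sc using F R2
        by (simp add: Target2 cA cB d_def[symmetric])
    next
      case R3: False
      have dn: "d = n0" using R3 dn0 by auto
      have q0: "q \<noteq> 0" using F pm unfolding d_def by auto
      have X1e: "X1 = smult (if p = 0 then 0 else (-1)^(q + (m0 + 1 - p)) * ((-1)^((p - 1 + 1) * (m0 + n0 - 1)) * of_nat (m0 choose (p - 1)))) (Rpoly A0)"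
      proof (cases "p = 0")
        case False
        have e: "p - 1 + q = d - 1" using False unfolding d_def by auto
        have "Target A0 B0 (p - 1) q = smult ((-1)^((p - 1 + 1) * (m0 + n0 - 1)) * of_nat (m0 choose (p - 1))) (Rpoly A0)"
          by (subst Target3) (use e F R3 dn d1' in \<open>auto simp: m0_def n0_def\<close>)
        thus ?thesis unfolding X1_def IH1[OF False] using False by simp
      qed (simp add: X1_def)
      have X2e: "X2 = smult (if p \<le> m0 then (-1)^((p + 1) * (m0 + n0 - 1)) * of_nat (m0 choose p) else 0) (Rpoly A0)"
      proof (cases "p \<le> m0")
        case True
        have e: "p + (q - 1) = d - 1" using q0 unfolding d_def by auto
        have "Target A0 B0 p (q - 1) = smult ((-1)^((p + 1) * (m0 + n0 - 1)) * of_nat (m0 choose p)) (Rpoly A0)"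
          by (subst Target3) (use e F R3 dn d1' in \<open>auto simp: m0_def n0_def\<close>)
        thus ?thesis unfolding X2_def IH2[OF q0 True] using q0 True by simp
      qed (insert Z2 q0, simp add: X2_def)
      have "X1 + X2 = smult ((-1)^((p + 1) * (m0 + 1 + (n0 + 1) - 1)) * of_nat ((m0 + 1) choose p)) (Rpoly A0)"
        unfolding X1e X2e smult_add_left[symmetric]
        by (subst SC3[symmetric, of p q n0 m0]) (use dn pm F in \<open>auto simp: d_def\<close>)
      moreover have "Target A B p q = smult ((-1)^((p + 1) * (m0 + 1 + (n0 + 1) - 1)) * of_nat ((m0 + 1) choose p)) (Rpoly A)"
        by (subst Target3) (use F R3 in \<open>auto simp: cA cB d_def\<close>)
      ultimately show ?thesis unfolding Sc RA by (simp add: mult_smult_right)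
    qed
  qed
qed

lemma DJ:
  fixes A B :: "'a::field set"
  assumes IH: "\<And>A' B' p' q'. card (A'::'a set) + card (B'::'a set) < card A + card B \<Longrightarrow> Hyp A' B' p' q' \<Longrightarrow>
      Syl p' q' A' B' = Target A' B' p' q'"
    and H: "Hyp A B p q" and disj: "A \<inter> B = {}" and y: "y \<in> A" and d1: "1 \<le> p + q"
  shows "Syl p q A B = Target A B p q"
proof -
  from H have fin: "finite A" "finite B" and pA: "p \<le> card A" and qB: "q \<le> card B"
    and dB: "p + q \<le> card B - 1" and nB: "card B \<ge> 1" unfolding Hyp_def by auto
  define A0 where "A0 = A - {y}"
  have fin0: "finite A0" and yA0: "y \<notin> A0" and Aeq: "A = insert y A0" using fin y unfolding A0_def by auto
  define m0 n d where "m0 = card A0" and "n = card B" and "d = p + q"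
  have cA: "card A = m0 + 1" unfolding m0_def Aeq using fin0 yA0 by simp
  obtain T where Tdeg: "degree T \<le> n - d" and Tev: "\<And>c. c \<notin> A0 \<Longrightarrow> poly T [:c:] = Target (insert c A0) B p q"
    using Target_gen[OF fin0 fin(2) nB dB] unfolding n_def d_def by blast
  define D where "D = Pgen A0 B p q - RY A0 * T"
  have "D = 0"
  proof (rule poly_zero_by_roots[of "A0 \<union> B"])
    show "finite (A0 \<union> B)" using fin0 fin by simp
    have cZ: "card (A0 \<union> B) = m0 + n" unfolding m0_def n_def
      by (rule card_Un_disjoint) (use fin0 fin disj Aeq in auto)
    have d1': "degree (Pgen A0 B p q) < m0 + n"
      using Pgen_degree[OF fin0 fin(2), of p q] d1 dB unfolding m0_def[symmetric] n_def[symmetric] d_def[symmetric]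
      by (simp add: n_def)
    have d2': "degree (RY A0 * T) < m0 + n"
    proof -
      have "degree (RY A0 * T) \<le> m0 + (n - d)"
        by (rule order.trans[OF degree_mult_le], use Tdeg fin0 in \<open>simp add: m0_def\<close>)
      thus ?thesis using d1 dB unfolding n_def d_def by linarith
    qed
    show "degree D < card (A0 \<union> B)" unfolding cZ D_def
      using degree_diff_le_max[of "Pgen A0 B p q" "RY A0 * T"] d1' d2' by linarith
  next
    fix z assume "z \<in> A0 \<union> B"
    thus "poly D [:z:] = 0"
    proof
      assume z: "z \<in> A0"
      show ?thesis unfolding D_def using Pgen_root[OF fin0 fin(2) z] by (simp add: poly_RY[OF fin0] Rv_zero[OF fin0 z])
    next
      assume z: "z \<in> B"
      have zA0: "z \<notin> A0" using z disj Aeq by auto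
      have Hz: "Hyp (insert z A0) B p q" using H cA fin0 zA0 unfolding Hyp_def m0_def by simp
      have cz: "card (insert z A0) = card A" using cA fin0 zA0 unfolding m0_def by simp
      have "Syl p q (insert z A0) B = Target (insert z A0) B p q"
        by (rule ND[OF _ Hz _ z d1], rule IH, unfold cz, auto)
      hence "poly (Pgen A0 B p q) [:z:] = smult (Rv z A0) (poly T [:z:])"
        unfolding Pgen_eval[OF fin0 fin(2) zA0] Tev[OF zA0] by simp
      thus ?thesis unfolding D_def by (simp add: poly_RY[OF fin0])
    qed
  qed
  hence "poly (Pgen A0 B p q) [:y:] = poly (RY A0 * T) [:y:]" unfolding D_def by simp
  hence "smult (Rv y A0) (Syl p q A B) = smult (Rv y A0) (Target A B p q)"
    unfolding Pgen_eval[OF fin0 fin(2) yA0] poly_mult poly_RY[OF fin0] Tev[OF yA0] Aeq[symmetric] by simp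
  hence "smult (inverse (Rv y A0)) (smult (Rv y A0) (Syl p q A B)) =
     smult (inverse (Rv y A0)) (smult (Rv y A0) (Target A B p q))" by simp
  thus ?thesis using Rv_nonzero[OF yA0] by simp
qed

lemma main:
  fixes A B :: "'a::field set"
  shows "Hyp A B p q \<Longrightarrow> Syl p q A B = Target A B p q"
proof (induction "card A + card B" arbitrary: A B p q rule: less_induct)
  case less
  have IH: "\<And>A' B' p' q'. card (A'::'a set) + card (B'::'a set) < card A + card B \<Longrightarrow> Hyp A' B' p' q' \<Longrightarrow>
      Syl p' q' A' B' = Target A' B' p' q'" using less.hyps by blast
  from less.prems have fin: "finite A" "finite B" and pA: "p \<le> card A" and qB: "q \<le> card B"
    and dB: "p + q \<le> card B - 1" and nB: "card B \<ge> 1" unfolding Hyp_def by auto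
  show ?case
  proof (cases "p + q = 0")
    case True
    hence pq: "p = 0" "q = 0" by auto
    have S0: "Sub 0 X = {{}}" if "finite X" for X :: "'a set"
    proof (rule equalityI; rule subsetI)
      fix Y
      assume "Y \<in> Sub 0 X"
      hence Y: "Y \<subseteq> X" "card Y = 0" by (auto dest: Sub_D)
      have "finite Y" by (rule finite_subset[OF Y(1) that])
      thus "Y \<in> {{}}" using Y by simp
    qed (simp add: Sub_def)
    have "Syl 0 0 A B = [:Res A B:]"
      unfolding Syl_double S0[OF fin(1)] S0[OF fin(2)] by (simp add: SylT_def)
    moreover have "Sres 0 (Rpoly A) (Rpoly B) = [:Res A B:]"
      by (rule Sres0_Res) (use fin nB in auto)
    ultimately show ?thesis unfolding pq Target_def by simp
  next
    case False
    hence d1: "1 \<le> p + q" by auto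
    show ?thesis
    proof (cases "A \<inter> B = {}")
      case disj: True
      show ?thesis
      proof (cases "A = {}")
        case True
        hence p0: "p = 0" using pA by simp
        show ?thesis
        proof (cases "q < card B - 1")
          case True
          have "Syl 0 q {} B = 0" by (rule Syl_empty_zero) (use fin True d1 p0 in auto)
          thus ?thesis unfolding \<open>A = {}\<close> p0 using True d1 p0 by (simp add: Target_def)
        next
          case False
          hence q: "q = card B - 1" using dB p0 by auto
          have nb: "\<not> card B \<le> 1" using d1 p0 q by auto
          show ?thesis unfolding \<open>A = {}\<close> p0 q Syl_lagrange[OF fin(2) nB]
            using nb by (simp add: Target_def)
        qed
      next
        case False
        then obtain y where "y \<in> A" by auto
        show ?thesis by (rule DJ[OF IH less.prems disj \<open>y \<in> A\<close> d1])
      qed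
    next
      case False
      then obtain c where "c \<in> A" "c \<in> B" by auto
      show ?thesis by (rule ND[OF IH less.prems \<open>c \<in> A\<close> \<open>c \<in> B\<close> d1])
    qed
  qed
qed

theorem corollary3p7:
  fixes A B :: "'a::field set" and p q :: nat
  assumes "finite A" and "finite B"
    and "p \<le> card A" and "q \<le> card B"
    and "p + q \<le> card B - 1" and "card B \<ge> 1"
  shows "let m = card A; n = card B; d = p + q; f = Rpoly A; g = Rpoly B in
     (d \<le> min m (n - 1) \<longrightarrow>
        Syl p q A B = smult ((-1) ^ (p * (m - d)) * of_nat (d choose p)) (Sres d f g)) \<and>
     (m < d \<and> d < n - 1 \<longrightarrow> Syl p q A B = 0) \<and>
     (m < d \<and> d = n - 1 \<longrightarrow>
        Syl p q A B = smult ((-1) ^ ((p + 1) * (m + n - 1)) * of_nat (m choose p)) f)"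
proof -
  have "Hyp A B p q" unfolding Hyp_def using assms by auto
  hence eq: "Syl p q A B = Target A B p q" by (rule main)
  show ?thesis unfolding Let_def eq Target_def using assms by auto
qed


end
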